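(* Let $\Gamma$ be a finitely generated group with finite symmetric generating set $S$, and let $\rho\colon\Gamma\curvearrowright\mathcal H$ be an affine action on a Hilbert space such that $\rho(\Gamma)$ has no fixed point. Fix $x\in\Gamma$. Then there exist a Hilbert space $\mathcal H'$, an affine action $\rho'\colon\Gamma\curvearrowright\mathcal H'$, and a nonconstant $\rho'$-equivariant map $f\colon\Gamma\to\mathcal H'$ minimizing the local energy at $x$, i.e. $E(f)(x)\le E(g)(x)$ for every $\rho'$-equivariant $g\colon\Gamma\to\mathcal H'$. Moreover, if the linear parts of $\rho$ satisfy $\|A(\gamma)\|\le C\,l(\gamma)^\sigma$ for all $\gamma\ne e$ for some $C>0,\sigma\ge0$, then the linear parts of $\rho'$ satisfy the same bound with the same $C,\sigma$.
   Context: Affine action $\rho(\gamma)(\mathbf v)=A(\gamma)\mathbf v+b(\gamma)$ with $A(\gamma)$ bounded linear; $l$ is word length w.r.t. $S$. $f$ is $\rho$-equivariant if $f(\gamma x)=\rho(\gamma)(f(x))$ for all $\gamma,x$. Local energy: $E(f)(x)=\frac12\sum_{x'\in\Gamma}\|f(x)-f(x')\|^2\mu(x\to x')=\frac1{2\#S}\sum_{s\in S}\|f(x)-f(xs)\|^2$, where $\mu(x\to x')=1/\#S$ if $x'=xs$ for some $s\in S$ and $0$ otherwise. *)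

theory Defs
  imports "HOL-Analysis.Analysis" "HOL-Algebra.Generated_Groups"
begin

definition word_length :: "('g, 'c) monoid_scheme \<Rightarrow> 'g set \<Rightarrow> 'g \<Rightarrow> nat" where
  "word_length G S \<gamma> =
     (LEAST n. \<exists>ws. length ws = n \<and> set ws \<subseteq> S \<and> foldr (\<otimes>\<^bsub>G\<^esub>) ws \<one>\<^bsub>G\<^esub> = \<gamma>)"

definition aff :: "('g \<Rightarrow> ('a::real_normed_vector \<Rightarrow>\<^sub>L 'a)) \<Rightarrow> ('g \<Rightarrow> 'a) \<Rightarrow> 'g \<Rightarrow> 'a \<Rightarrow> 'a" where
  "aff A b \<gamma> v = blinfun_apply (A \<gamma>) v + b \<gamma>"

definition affine_action ::
  "('g, 'c) monoid_scheme \<Rightarrow> ('g \<Rightarrow> ('a::real_normed_vector \<Rightarrow>\<^sub>L 'a)) \<Rightarrow> ('g \<Rightarrow> 'a) \<Rightarrow> bool" where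
  "affine_action G A b \<longleftrightarrow>
     (\<forall>v. aff A b \<one>\<^bsub>G\<^esub> v = v) \<and>
     (\<forall>\<gamma>\<in>carrier G. \<forall>\<delta>\<in>carrier G. \<forall>v.
        aff A b (\<gamma> \<otimes>\<^bsub>G\<^esub> \<delta>) v = aff A b \<gamma> (aff A b \<delta> v))"

definition has_fixed_point :: "('g, 'c) monoid_scheme \<Rightarrow> ('g \<Rightarrow> 'a \<Rightarrow> 'a) \<Rightarrow> bool" where
  "has_fixed_point G \<rho> \<longleftrightarrow> (\<exists>v. \<forall>\<gamma>\<in>carrier G. \<rho> \<gamma> v = v)"

definition equivariant :: "('g, 'c) monoid_scheme \<Rightarrow> ('g \<Rightarrow> 'a \<Rightarrow> 'a) \<Rightarrow> ('g \<Rightarrow> 'a) \<Rightarrow> bool" where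
  "equivariant G \<rho> f \<longleftrightarrow> (\<forall>\<gamma>\<in>carrier G. \<forall>x\<in>carrier G. f (\<gamma> \<otimes>\<^bsub>G\<^esub> x) = \<rho> \<gamma> (f x))"

definition local_energy ::
  "('g, 'c) monoid_scheme \<Rightarrow> 'g set \<Rightarrow> ('g \<Rightarrow> 'a::real_normed_vector) \<Rightarrow> 'g \<Rightarrow> real" where
  "local_energy G S f x = (1 / (2 * real (card S))) * (\<Sum>s\<in>S. (norm (f x - f (x \<otimes>\<^bsub>G\<^esub> s)))\<^sup>2)"

definition linear_growth_bound ::
  "('g, 'c) monoid_scheme \<Rightarrow> 'g set \<Rightarrow> ('g \<Rightarrow> ('a::real_normed_vector \<Rightarrow>\<^sub>L 'a)) \<Rightarrow> real \<Rightarrow> real \<Rightarrow> bool" where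
  "linear_growth_bound G S A C \<sigma> \<longleftrightarrow>
     (\<forall>\<gamma>\<in>carrier G. \<gamma> \<noteq> \<one>\<^bsub>G\<^esub> \<longrightarrow> norm (A \<gamma>) \<le> C * real (word_length G S \<gamma>) powr \<sigma>)"

end

theory Submission
  imports Defs "HOL-Library.Diagonal_Subsequence"
begin


lemma aff_action_one:
  assumes "affine_action G A b"
  shows "b \<one>\<^bsub>G\<^esub> = 0" "\<And>v. blinfun_apply (A \<one>\<^bsub>G\<^esub>) v = v"
proof -
  have h: "\<And>v. blinfun_apply (A \<one>\<^bsub>G\<^esub>) v + b \<one>\<^bsub>G\<^esub> = v"
    using assms unfolding affine_action_def aff_def by auto
  from h[of 0] show b1: "b \<one>\<^bsub>G\<^esub> = 0" by simp
  show "\<And>v. blinfun_apply (A \<one>\<^bsub>G\<^esub>) v = v" using h b1 by simp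
qed

lemma aff_action_mult:
  assumes "affine_action G A b" "g \<in> carrier G" "h \<in> carrier G"
  shows "b (g \<otimes>\<^bsub>G\<^esub> h) = blinfun_apply (A g) (b h) + b g"
    "\<And>v. blinfun_apply (A (g \<otimes>\<^bsub>G\<^esub> h)) v = blinfun_apply (A g) (blinfun_apply (A h) v)"
proof -
  have e: "\<And>v. blinfun_apply (A (g \<otimes>\<^bsub>G\<^esub> h)) v + b (g \<otimes>\<^bsub>G\<^esub> h)
      = blinfun_apply (A g) (blinfun_apply (A h) v + b h) + b g"
    using assms unfolding affine_action_def aff_def by auto
  from e[of 0] show b1: "b (g \<otimes>\<^bsub>G\<^esub> h) = blinfun_apply (A g) (b h) + b g"
    by (simp add: blinfun.add_right)
  show "\<And>v. blinfun_apply (A (g \<otimes>\<^bsub>G\<^esub> h)) v = blinfun_apply (A g) (blinfun_apply (A h) v)"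
    using e b1 by (simp add: blinfun.add_right)
qed

lemma (in group) aff_action_inv:
  assumes "affine_action G A b" "g \<in> carrier G"
  shows "\<And>v. blinfun_apply (A g) (blinfun_apply (A (inv g)) v) = v"
    "\<And>v. blinfun_apply (A (inv g)) (blinfun_apply (A g) v) = v"
proof -
  fix v
  show "blinfun_apply (A g) (blinfun_apply (A (inv g)) v) = v"
    using aff_action_mult(2)[OF assms(1) assms(2), of "inv g" v] aff_action_one[OF assms(1)] assms(2)
    by simp
  show "blinfun_apply (A (inv g)) (blinfun_apply (A g) v) = v"
    using aff_action_mult(2)[OF assms(1) _ assms(2), of "inv g" v] aff_action_one[OF assms(1)] assms(2)
    by simp
qed

lemma (in group) norm_prod_ge1:
  fixes A :: "'a \<Rightarrow> ('v::real_normed_vector \<Rightarrow>\<^sub>L 'v)" and v :: 'v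
  assumes "affine_action G A b" "g \<in> carrier G" "v \<noteq> 0"
  shows "1 \<le> norm (A g) * norm (A (inv g))"
proof -
  have "norm v = norm (blinfun_apply (A g) (blinfun_apply (A (inv g)) v))"
    using aff_action_inv[OF assms(1-2)] by simp
  also have "\<dots> \<le> norm (A g) * norm (blinfun_apply (A (inv g)) v)"
    by (rule norm_blinfun)
  also have "\<dots> \<le> norm (A g) * (norm (A (inv g)) * norm v)"
    by (rule mult_left_mono[OF norm_blinfun], simp)
  finally have "1 * norm v \<le> (norm (A g) * norm (A (inv g))) * norm v"
    by (simp add: mult.assoc)
  then show ?thesis using assms(3) by (simp add: mult_le_cancel_right)
qed

lemma (in group) foldr_inv_rev:
  assumes "set ws \<subseteq> carrier G"
  shows "foldr (\<otimes>) (rev (map (\<lambda>y. inv y) ws)) \<one> = inv (foldr (\<otimes>) ws \<one>)"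
  using assms
proof (induction ws)
  case Nil
  then show ?case by simp
next
  case (Cons a ws)
  have fc: "\<And>l. set l \<subseteq> carrier G \<Longrightarrow> foldr (\<otimes>) l \<one> \<in> carrier G"
  proof -
    fix l :: "'a list" show "set l \<subseteq> carrier G \<Longrightarrow> foldr (\<otimes>) l \<one> \<in> carrier G"
      by (induct l) auto
  qed
  have fa: "\<And>l m. set l \<subseteq> carrier G \<Longrightarrow> set m \<subseteq> carrier G \<Longrightarrow>
      foldr (\<otimes>) (l @ m) \<one> = foldr (\<otimes>) l \<one> \<otimes> foldr (\<otimes>) m \<one>"
  proof -
    fix l m :: "'a list" assume l: "set l \<subseteq> carrier G" and m: "set m \<subseteq> carrier G"
    show "foldr (\<otimes>) (l @ m) \<one> = foldr (\<otimes>) l \<one> \<otimes> foldr (\<otimes>) m \<one>"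
      using l by (induct l) (auto simp: m_assoc fc[OF m] fc)
  qed
  have a: "a \<in> carrier G" and ws: "set ws \<subseteq> carrier G" using Cons.prems by auto
  have "foldr (\<otimes>) (rev (map (\<lambda>y. inv y) (a # ws))) \<one> = foldr (\<otimes>) (rev (map (\<lambda>y. inv y) ws) @ [inv a]) \<one>" by simp
  also have "\<dots> = foldr (\<otimes>) (rev (map (\<lambda>y. inv y) ws)) \<one> \<otimes> foldr (\<otimes>) [inv a] \<one>"
    by (rule fa) (use ws a in auto)
  also have "\<dots> = inv (foldr (\<otimes>) ws \<one>) \<otimes> inv a"
    using Cons.IH[OF ws] a by simp
  also have "\<dots> = inv (a \<otimes> foldr (\<otimes>) ws \<one>)"
    using inv_mult_group[OF a fc[OF ws]] by simp
  finally show ?case by simp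
qed

lemma (in group) word_length_inv:
  assumes "S \<subseteq> carrier G" "\<forall>s\<in>S. inv s \<in> S" "g \<in> carrier G"
  shows "word_length G S (inv g) = word_length G S g"
proof -
  have one: "\<And>h n. h \<in> carrier G \<Longrightarrow> (\<exists>ws. length ws = n \<and> set ws \<subseteq> S \<and> foldr (\<otimes>) ws \<one> = h)
      \<Longrightarrow> (\<exists>ws. length ws = n \<and> set ws \<subseteq> S \<and> foldr (\<otimes>) ws \<one> = inv h)"
  proof -
    fix h n assume h: "h \<in> carrier G" and "\<exists>ws. length ws = n \<and> set ws \<subseteq> S \<and> foldr (\<otimes>) ws \<one> = h"
    then obtain ws where ws: "length ws = n" "set ws \<subseteq> S" "foldr (\<otimes>) ws \<one> = h" by blast
    show "\<exists>ws. length ws = n \<and> set ws \<subseteq> S \<and> foldr (\<otimes>) ws \<one> = inv h"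
      apply (rule exI[of _ "rev (map (\<lambda>y. inv y) ws)"])
      using ws assms(1,2) foldr_inv_rev[of ws] by auto
  qed
  have "\<And>n. (\<exists>ws. length ws = n \<and> set ws \<subseteq> S \<and> foldr (\<otimes>) ws \<one> = inv g)
     = (\<exists>ws. length ws = n \<and> set ws \<subseteq> S \<and> foldr (\<otimes>) ws \<one> = g)"
    using one[of g] one[of "inv g"] assms(3) by (metis inv_closed inv_inv)
  then show ?thesis unfolding word_length_def by simp
qed

lemma (in group) growth_ge1:
  fixes A :: "'a \<Rightarrow> ('v::real_normed_vector \<Rightarrow>\<^sub>L 'v)" and v :: 'v
  assumes "affine_action G A b" "S \<subseteq> carrier G" "\<forall>s\<in>S. inv s \<in> S"
    "linear_growth_bound G S A C \<sigma>" "g \<in> carrier G" "g \<noteq> \<one>" "v \<noteq> 0"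
  shows "1 \<le> C * real (word_length G S g) powr \<sigma>"
proof -
  let ?B = "C * real (word_length G S g) powr \<sigma>"
  have ig: "inv g \<in> carrier G" "inv g \<noteq> \<one>" using assms(5,6) by auto
  have n1: "norm (A g) \<le> ?B" using assms(4-6) unfolding linear_growth_bound_def by auto
  have n2: "norm (A (inv g)) \<le> ?B" using assms(4) ig word_length_inv[OF assms(2,3,5)]
    unfolding linear_growth_bound_def by auto
  have "1 \<le> norm (A g) * norm (A (inv g))" by (rule norm_prod_ge1[OF assms(1,5,7)])
  also have "\<dots> \<le> ?B * ?B" by (rule mult_mono[OF n1 n2]) (use n1 norm_ge_zero order_trans in blast)+
  finally have "1 \<le> ?B * ?B" .
  moreover have "0 \<le> ?B" using n1 norm_ge_zero order_trans by blast
  ultimately show ?thesis using power2_le_imp_le[of 1 ?B] by (simp add: power2_eq_square)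
qed

lemma (in group) growth_transfer:
  fixes A :: "'a \<Rightarrow> ('v::real_normed_vector \<Rightarrow>\<^sub>L 'v)" and v :: 'v
  assumes "affine_action G A b" "S \<subseteq> carrier G" "\<forall>s\<in>S. inv s \<in> S"
    "v \<noteq> 0"
    "\<And>g. g \<in> carrier G \<Longrightarrow> norm (A' g) \<le> max 1 (norm (A g))"
    "linear_growth_bound G S A C \<sigma>"
  shows "linear_growth_bound G S A' C \<sigma>"
  unfolding linear_growth_bound_def
proof (intro ballI impI)
  fix g assume g: "g \<in> carrier G" "g \<noteq> \<one>\<^bsub>G\<^esub>"
  have "1 \<le> C * real (word_length G S g) powr \<sigma>" by (rule growth_ge1[OF assms(1-3,6) g assms(4)])
  moreover have "norm (A g) \<le> C * real (word_length G S g) powr \<sigma>"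
    using assms(6) g unfolding linear_growth_bound_def by auto
  ultimately show "norm (A' g) \<le> C * real (word_length G S g) powr \<sigma>"
    using assms(5)[OF g(1)] by linarith
qed



section \<open>Gram-Schmidt in a real inner product space\<close>

primrec gsl :: "(nat \<Rightarrow> 'v::real_inner) \<Rightarrow> nat \<Rightarrow> 'v list" where
  "gsl d 0 = []"
| "gsl d (Suc n) = gsl d n @
     [(let g = d n - sum_list (map (\<lambda>u. inner (d n) u *\<^sub>R u) (gsl d n)) in g /\<^sub>R norm g)]"

definition gs :: "(nat \<Rightarrow> 'v::real_inner) \<Rightarrow> nat \<Rightarrow> 'v" where
  "gs d n = gsl d (Suc n) ! n"

lemma length_gsl[simp]: "length (gsl d n) = n"
  by (induct n) auto

lemma gsl_nth: "j < n \<Longrightarrow> gsl d n ! j = gs d j"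
proof (induct n)
  case 0 then show ?case by simp
next
  case (Suc n)
  show ?case
  proof (cases "j < n")
    case True then show ?thesis using Suc by (simp add: nth_append)
  next
    case False then have "j = n" using Suc by simp
    then show ?thesis by (simp add: gs_def)
  qed
qed

lemma gsl_eq: "gsl d n = map (gs d) [0..<n]"
  by (rule nth_equalityI) (auto simp: gsl_nth)

definition gsres :: "(nat \<Rightarrow> 'v::real_inner) \<Rightarrow> nat \<Rightarrow> 'v" where
  "gsres d n = d n - (\<Sum>j<n. inner (d n) (gs d j) *\<^sub>R gs d j)"

lemma gs_def2: "gs d n = gsres d n /\<^sub>R norm (gsres d n)"
proof -
  have "sum_list (map (\<lambda>u. inner (d n) u *\<^sub>R u) (gsl d n)) = (\<Sum>j<n. inner (d n) (gs d j) *\<^sub>R gs d j)"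
    by (simp add: gsl_eq sum_list_sum_nth atLeast0LessThan)
  then show ?thesis unfolding gs_def gsres_def by (simp add: Let_def nth_append)
qed

lemma gs_orth: "(\<forall>i<n. inner (gs d i) (gs d n) = 0) \<and> (norm (gs d n) = 0 \<or> norm (gs d n) = 1)"
proof (induct n rule: less_induct)
  case (less n)
  have IH1: "\<And>i k. i < k \<Longrightarrow> k < n \<Longrightarrow> inner (gs d i) (gs d k) = 0" using less by blast
  have IH2: "\<And>k. k < n \<Longrightarrow> norm (gs d k) = 0 \<or> norm (gs d k) = 1" using less by blast
  have o: "inner (gs d i) (gs d k) = 0" if "i < n" "k < n" "i \<noteq> k" for i k
  proof (cases "i < k")
    case True then show ?thesis using IH1 that by blast
  next
    case False then have "k < i" using that by simp
    then have "inner (gs d k) (gs d i) = 0" using IH1 that by blast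
    then show ?thesis by (simp only: inner_commute)
  qed
  have r: "inner (gsres d n) (gs d i) = 0" if i: "i < n" for i
  proof -
    have "inner (gsres d n) (gs d i) = inner (d n) (gs d i)
        - (\<Sum>j<n. inner (d n) (gs d j) * inner (gs d j) (gs d i))"
      by (simp add: gsres_def inner_diff_left inner_sum_left)
    also have "(\<Sum>j<n. inner (d n) (gs d j) * inner (gs d j) (gs d i))
        = (\<Sum>j\<in>{i}. inner (d n) (gs d j) * inner (gs d j) (gs d i))"
      by (rule sum.mono_neutral_right) (use i o in simp_all)
    also have "\<dots> = inner (d n) (gs d i) * inner (gs d i) (gs d i)" by simp
    also have "inner (d n) (gs d i) * inner (gs d i) (gs d i) = inner (d n) (gs d i)"
    proof -
      have "inner (gs d i) (gs d i) = (norm (gs d i))\<^sup>2" by (simp only: power2_norm_eq_inner)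
      then show ?thesis using IH2[OF i] by auto
    qed
    finally show ?thesis by simp
  qed
  show ?case
  proof (intro conjI allI impI)
    fix i assume i: "i < n"
    have "inner (gs d i) (gs d n) = inner (gs d i) (gsres d n) / norm (gsres d n)"
      by (subst gs_def2[of d n]) (simp add: divide_inverse mult.commute)
    also have "inner (gs d i) (gsres d n) = 0" using r[OF i] by (simp only: inner_commute)
    finally show "inner (gs d i) (gs d n) = 0" by simp
  next
    show "norm (gs d n) = 0 \<or> norm (gs d n) = 1"
      by (cases "gsres d n = 0") (simp_all add: gs_def2[of d n])
  qed
qed

lemma gs_inner_ne: "i \<noteq> k \<Longrightarrow> inner (gs d i) (gs d k) = 0"
proof (cases "i < k")
  case True then show ?thesis using gs_orth by blast
next
  case False
  assume "i \<noteq> k"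
  with False have "k < i" by simp
  then have "inner (gs d k) (gs d i) = 0" using gs_orth by blast
  then show ?thesis by (simp only: inner_commute)
qed

lemma gs_norm: "norm (gs d n) = 0 \<or> norm (gs d n) = 1"
  using gs_orth by blast

lemma gs_inner_self: "inner (gs d n) (gs d n) = (if gs d n = 0 then 0 else 1)"
proof -
  have "inner (gs d n) (gs d n) = (norm (gs d n))\<^sup>2" by (simp only: power2_norm_eq_inner)
  then show ?thesis using gs_norm[of d n] by auto
qed

lemma gs_coeff_self: "inner (d n) (gs d n) *\<^sub>R gs d n = gsres d n"
proof (cases "gsres d n = 0")
  case True then show ?thesis by (simp add: gs_def2[of d n])
next
  case False
  have "inner (d n) (gs d n) = inner (gsres d n) (gs d n)
       + (\<Sum>j<n. inner (d n) (gs d j) * inner (gs d j) (gs d n))"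
    by (simp add: gsres_def inner_diff_left inner_sum_left)
  also have "(\<Sum>j<n. inner (d n) (gs d j) * inner (gs d j) (gs d n)) = 0"
    by (rule sum.neutral) (auto simp: gs_inner_ne)
  also have "inner (gsres d n) (gs d n) = norm (gsres d n)"
  proof -
    have "inner (gsres d n) (gs d n) = inner (gsres d n) (gsres d n) / norm (gsres d n)"
      by (subst gs_def2[of d n]) (simp add: divide_inverse mult.commute)
    also have "inner (gsres d n) (gsres d n) = norm (gsres d n) * norm (gsres d n)"
      by (simp only: power2_norm_eq_inner[symmetric] power2_eq_square)
    finally show ?thesis using False by simp
  qed
  finally show ?thesis using False by (simp add: gs_def2[of d n])
qed

lemma gs_expand: "d n = (\<Sum>j\<le>n. inner (d n) (gs d j) *\<^sub>R gs d j)"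
proof -
  have "(\<Sum>j\<le>n. inner (d n) (gs d j) *\<^sub>R gs d j)
      = (\<Sum>j<n. inner (d n) (gs d j) *\<^sub>R gs d j) + inner (d n) (gs d n) *\<^sub>R gs d n"
    by (simp add: lessThan_Suc_atMost[symmetric])
  also have "\<dots> = d n" by (simp add: gs_coeff_self gsres_def)
  finally show ?thesis by simp
qed

lemma gs_coeff_zero: assumes "n < j" shows "inner (d n) (gs d j) = 0"
proof -
  have "inner (d n) (gs d j) = (\<Sum>i\<le>n. inner (d n) (gs d i) * inner (gs d i) (gs d j))"
    by (subst gs_expand) (simp add: inner_sum_left)
  also have "\<dots> = 0" by (rule sum.neutral) (use assms in \<open>auto simp: gs_inner_ne\<close>)
  finally show ?thesis .
qed

lemma gs_expand_N: assumes "n \<le> N" shows "d n = (\<Sum>j\<le>N. inner (d n) (gs d j) *\<^sub>R gs d j)"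
proof -
  have "(\<Sum>j\<le>N. inner (d n) (gs d j) *\<^sub>R gs d j) = (\<Sum>j\<le>n. inner (d n) (gs d j) *\<^sub>R gs d j)"
    by (rule sum.mono_neutral_right) (use assms in \<open>auto simp: gs_coeff_zero\<close>)
  then show ?thesis using gs_expand by metis
qed

lemma gs_coeff_bound: "\<bar>inner (d n) (gs d j)\<bar> \<le> norm (d n)"
proof -
  have "\<bar>inner (d n) (gs d j)\<bar> \<le> norm (d n) * norm (gs d j)" by (rule Cauchy_Schwarz_ineq2)
  also have "\<dots> \<le> norm (d n)" using gs_norm[of d j] by auto
  finally show ?thesis .
qed

lemma gs_inner_formula:
  assumes "n \<le> N" "m \<le> N"
  shows "inner (d n) (d m) = (\<Sum>j\<le>N. inner (d n) (gs d j) * inner (d m) (gs d j))"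
proof -
  have "inner (d n) (d m) = (\<Sum>j\<le>N. inner (d n) (gs d j) * inner (gs d j) (d m))"
    by (subst gs_expand_N[OF assms(1)]) (simp add: inner_sum_left)
  also have "\<dots> = (\<Sum>j\<le>N. inner (d n) (gs d j) * inner (d m) (gs d j))"
    by (rule sum.cong[OF refl]) (metis inner_commute)
  finally show ?thesis .
qed

lemma orthonormal_sum_inner:
  fixes e :: "nat \<Rightarrow> 'v::real_inner"
  assumes "\<And>i j. i \<noteq> j \<Longrightarrow> inner (e i) (e j) = 0" "\<And>i. inner (e i) (e i) = 1"
  shows "inner (\<Sum>j\<le>N. a j *\<^sub>R e j) (\<Sum>j\<le>N. c j *\<^sub>R e j) = (\<Sum>j\<le>N. a j * c j)"
proof -
  have "inner (\<Sum>j\<le>N. a j *\<^sub>R e j) (\<Sum>j\<le>N. c j *\<^sub>R e j)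
      = (\<Sum>j\<le>N. \<Sum>k\<le>N. a j * c k * inner (e j) (e k))"
  proof -
    have "inner (\<Sum>j\<le>N. a j *\<^sub>R e j) (\<Sum>j\<le>N. c j *\<^sub>R e j)
        = (\<Sum>j\<le>N. a j * inner (e j) (\<Sum>k\<le>N. c k *\<^sub>R e k))"
      by (simp add: inner_sum_left)
    also have "\<dots> = (\<Sum>j\<le>N. \<Sum>k\<le>N. a j * c k * inner (e j) (e k))"
      by (rule sum.cong[OF refl]) (simp add: inner_sum_right sum_distrib_left mult.assoc)
    finally show ?thesis .
  qed
  also have "\<dots> = (\<Sum>j\<le>N. a j * c j)"
  proof (rule sum.cong[OF refl])
    fix j assume j: "j \<in> {..N}"
    have "(\<Sum>k\<le>N. a j * c k * inner (e j) (e k)) = (\<Sum>k\<in>{j}. a j * c k * inner (e j) (e k))"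
      by (rule sum.mono_neutral_right) (use j assms(1) in auto)
    then show "(\<Sum>k\<le>N. a j * c k * inner (e j) (e k)) = a j * c j" using assms(2) by simp
  qed
  finally show ?thesis .
qed



lemma parallelogram: "norm (a + b)^2 + norm (a - b)^2 = 2 * norm a ^2 + 2 * norm (b::'v::real_inner)^2"
  by (simp add: power2_norm_eq_inner inner_add_left inner_add_right inner_diff_left inner_diff_right inner_commute)

lemma proj_exists:
  fixes V :: "'v::{real_inner,complete_space} set"
  assumes sub: "subspace V" and cl: "closed V"
  shows "\<exists>p\<in>V. \<forall>w\<in>V. inner (v - p) w = 0"
proof -
  define D where "D = (\<lambda>w. norm (v - w)) ` V"
  have ne: "D \<noteq> {}" using subspace_0[OF sub] unfolding D_def by auto
  have bdd: "bdd_below D" unfolding D_def by (rule bdd_belowI[of _ 0]) auto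
  define \<delta> where "\<delta> = Inf D"
  have lower: "\<delta> \<le> norm (v - w)" if "w \<in> V" for w
    unfolding \<delta>_def D_def using bdd that by (auto intro!: cInf_lower simp: D_def)
  have d0: "0 \<le> \<delta>" unfolding \<delta>_def using ne by (rule cInf_greatest) (auto simp: D_def)
  have ex: "\<exists>w\<in>V. norm (v - w) < \<delta> + 1 / (real n + 1)" for n
  proof -
    have "Inf D < \<delta> + 1 / (real n + 1)" unfolding \<delta>_def by simp
    then obtain y where "y \<in> D" "y < \<delta> + 1 / (real n + 1)"
      using cInf_lessD[OF ne] by blast
    then show ?thesis unfolding D_def by auto
  qed
  then obtain w where wV: "\<And>n. w n \<in> V" and wd: "\<And>n. norm (v - w n) < \<delta> + 1 / (real n + 1)"
    by metis
  define \<eta> where "\<eta> n = (2 * \<delta> + 1) / (real n + 1)" for n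
  have sq: "norm (v - w n)^2 \<le> \<delta>^2 + \<eta> n" for n
  proof -
    have a: "0 \<le> norm (v - w n)" by simp
    have "norm (v - w n)^2 \<le> (\<delta> + 1 / (real n + 1))^2"
      using wd[of n] a by (intro power_mono) auto
    also have "\<dots> = \<delta>^2 + (2 * \<delta> + 1 / (real n + 1)) * (1 / (real n + 1))"
      by (simp add: power2_eq_square algebra_simps)
    also have "\<dots> = \<delta>^2 + (2 * \<delta> + 1 / (real n + 1)) / (real n + 1)"
      by simp
    also have "\<dots> \<le> \<delta>^2 + \<eta> n" unfolding \<eta>_def
      using d0 by (intro add_left_mono divide_right_mono) (auto simp: field_simps)
    finally show ?thesis .
  qed
  have par: "norm (w n - w m)^2 \<le> 2 * \<eta> n + 2 * \<eta> m" for n m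
  proof -
    have mid: "(1/2) *\<^sub>R (w n + w m) \<in> V"
      using wV sub by (intro subspace_scale subspace_add) auto
    have "2 * \<delta> \<le> 2 * norm (v - (1/2) *\<^sub>R (w n + w m))" using lower[OF mid] by simp
    also have "2 * norm (v - (1/2) *\<^sub>R (w n + w m)) = norm ((v - w n) + (v - w m))"
    proof -
      have "(v - w n) + (v - w m) = 2 *\<^sub>R (v - (1/2) *\<^sub>R (w n + w m))"
        by (simp add: algebra_simps scaleR_2)
      then show ?thesis by simp
    qed
    finally have h: "2 * \<delta> \<le> norm ((v - w n) + (v - w m))" .
    have h2: "(2 * \<delta>)^2 \<le> norm ((v - w n) + (v - w m))^2"
      using h d0 by (intro power_mono) auto
    have "norm ((v - w n) + (v - w m))^2 + norm ((v - w n) - (v - w m))^2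
        = 2 * norm (v - w n)^2 + 2 * norm (v - w m)^2" by (rule parallelogram)
    moreover have "(v - w n) - (v - w m) = - (w n - w m)" by simp
    ultimately have "norm (w n - w m)^2 = 2 * norm (v - w n)^2 + 2 * norm (v - w m)^2
        - norm ((v - w n) + (v - w m))^2" by (simp only: norm_minus_cancel)
    then show ?thesis using sq[of n] sq[of m] h2 by (simp add: power2_eq_square)
  qed
  have eta_small: "\<exists>M. \<forall>n\<ge>M. \<eta> n < e" if "e > 0" for e
  proof -
    obtain M :: nat where M: "(2 * \<delta> + 1) / e < real M" using reals_Archimedean2 by blast
    show ?thesis
    proof (intro exI allI impI)
      fix n assume "M \<le> n"
      then have "(2 * \<delta> + 1) / e < real n + 1" using M by linarith
      then have "2 * \<delta> + 1 < e * (real n + 1)" using that by (simp add: field_simps)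
      then show "\<eta> n < e" unfolding \<eta>_def using that by (simp add: field_simps)
    qed
  qed
  have "Cauchy w"
  proof (rule CauchyI)
    fix e :: real assume e: "0 < e"
    obtain M where M: "\<And>n. n \<ge> M \<Longrightarrow> \<eta> n < e^2 / 4"
      using eta_small[of "e^2/4"] e by auto
    show "\<exists>M. \<forall>m\<ge>M. \<forall>n\<ge>M. norm (w m - w n) < e"
    proof (intro exI allI impI)
      fix m n assume "M \<le> m" "M \<le> n"
      then have "norm (w m - w n)^2 < e^2" using par[of m n] M[of m] M[of n] by linarith
      then show "norm (w m - w n) < e" using e by (simp add: power_less_imp_less_base)
    qed
  qed
  then obtain p where lim: "w \<longlonglongrightarrow> p" using Cauchy_convergent_iff convergent_def by blast
  have pV: "p \<in> V" using cl wV lim closed_sequentially by blast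
  have "(\<lambda>n. norm (v - w n)) \<longlonglongrightarrow> norm (v - p)"
    by (intro tendsto_intros lim)
  moreover have "(\<lambda>n. \<delta> + 1 / (real n + 1)) \<longlonglongrightarrow> \<delta> + 0"
    by (intro tendsto_intros) (use LIMSEQ_inverse_real_of_nat in \<open>simp add: inverse_eq_divide add.commute\<close>)
  ultimately have pd: "norm (v - p) \<le> \<delta>"
    using wd by (intro LIMSEQ_le[where X="\<lambda>n. norm (v - w n)"]) (auto intro: less_imp_le)
  have minp: "norm (v - p) \<le> norm (v - q)" if "q \<in> V" for q
    using pd lower[OF that] by linarith
  show ?thesis
  proof (intro bexI[OF _ pV] ballI)
    fix u assume uV: "u \<in> V"
    define c where "c = inner (v - p) u"
    define W where "W = inner u u"
    have W0: "0 \<le> W" unfolding W_def by simp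
    have key: "2 * t * c \<le> t^2 * W" for t
    proof -
      have "p + t *\<^sub>R u \<in> V" using sub pV uV by (intro subspace_add subspace_scale) auto
      then have "norm (v - p)^2 \<le> norm (v - (p + t *\<^sub>R u))^2"
        using minp by (intro power_mono) auto
      also have "norm (v - (p + t *\<^sub>R u))^2 = norm (v - p)^2 - 2 * t * c + t^2 * W"
      proof -
        define a where "a = v - p"
        have "v - (p + t *\<^sub>R u) = a - t *\<^sub>R u" unfolding a_def by simp
        then have "norm (v - (p + t *\<^sub>R u))^2 = inner (a - t *\<^sub>R u) (a - t *\<^sub>R u)"
          by (simp only: power2_norm_eq_inner)
        also have "\<dots> = inner a a - 2 * t * inner a u + t^2 * inner u u"
          by (simp add: inner_diff_left inner_diff_right inner_commute[of u a] power2_eq_square algebra_simps)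
        finally show ?thesis unfolding c_def W_def a_def by (simp add: power2_norm_eq_inner)
      qed
      finally show ?thesis by simp
    qed
    show "inner (v - p) u = 0"
    proof (rule ccontr)
      assume "inner (v - p) u \<noteq> 0"
      then have c0: "c \<noteq> 0" unfolding c_def .
      define s where "s = 1 / (W + 1)"
      have s0: "s > 0" unfolding s_def using W0 by simp
      have k: "2 * (c * s) * c \<le> (c * s)^2 * W" by (rule key)
      have cs: "c^2 * s > 0" using c0 s0 by simp
      have "(c^2 * s) * 2 \<le> (c^2 * s) * (s * W)" using k by (simp add: power2_eq_square algebra_simps)
      then have "2 \<le> s * W" using cs by (simp only: mult_le_cancel_left_pos)
      moreover have "s * W < 1" unfolding s_def using W0 by simp
      ultimately show False by simp
    qed
  qed
qed

lemma pyth_orth: "inner a b = 0 \<Longrightarrow> norm (a + b) ^ 2 = norm a ^ 2 + norm (b::'v::real_inner) ^ 2"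
  by (simp add: power2_norm_eq_inner inner_add_left inner_add_right inner_commute)

definition proj :: "'v::real_inner set \<Rightarrow> 'v \<Rightarrow> 'v" where
  "proj V v = (SOME p. p \<in> V \<and> (\<forall>w\<in>V. inner (v - p) w = 0))"

locale closed_subspace =
  fixes V :: "'v::{real_inner,complete_space} set"
  assumes sub: "subspace V" and cl: "closed V"
begin

lemma proj: "proj V v \<in> V" "\<And>w. w \<in> V \<Longrightarrow> inner (v - proj V v) w = 0"
proof -
  have "proj V v \<in> V \<and> (\<forall>w\<in>V. inner (v - proj V v) w = 0)"
    unfolding proj_def by (rule someI_ex) (use proj_exists[OF sub cl] in blast)
  then show "proj V v \<in> V" "\<And>w. w \<in> V \<Longrightarrow> inner (v - proj V v) w = 0" by auto
qed

lemma proj_unique: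
  assumes "p \<in> V" "\<And>w. w \<in> V \<Longrightarrow> inner (v - p) w = 0"
  shows "proj V v = p"
proof -
  have q: "p - proj V v \<in> V" using assms(1) proj(1) sub by (simp add: subspace_diff)
  have "inner (p - proj V v) (p - proj V v) = inner (v - proj V v) (p - proj V v) - inner (v - p) (p - proj V v)"
    by (simp add: inner_diff_left)
  also have "\<dots> = 0" using proj(2)[OF q] assms(2)[OF q] by simp
  finally show ?thesis by simp
qed

lemma proj_id: "v \<in> V \<Longrightarrow> proj V v = v"
  by (rule proj_unique) auto

lemma proj_add: "proj V (u + v) = proj V u + proj V v"
proof (rule proj_unique)
  show "proj V u + proj V v \<in> V" using proj(1) sub by (simp add: subspace_add)
  fix w assume w: "w \<in> V"
  have "u + v - (proj V u + proj V v) = (u - proj V u) + (v - proj V v)" by simp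
  then have "inner (u + v - (proj V u + proj V v)) w = inner (u - proj V u) w + inner (v - proj V v) w"
    by (simp only: inner_add_left)
  then show "inner (u + v - (proj V u + proj V v)) w = 0" using proj(2)[OF w] by simp
qed

lemma proj_scale: "proj V (c *\<^sub>R v) = c *\<^sub>R proj V v"
proof (rule proj_unique)
  show "c *\<^sub>R proj V v \<in> V" using proj(1) sub by (rule subspace_scale[rotated])
  fix w assume "w \<in> V"
  have "inner (c *\<^sub>R v - c *\<^sub>R proj V v) w = c * inner (v - proj V v) w"
    by (simp add: inner_diff_left right_diff_distrib)
  then show "inner (c *\<^sub>R v - c *\<^sub>R proj V v) w = 0" using proj(2)[OF \<open>w \<in> V\<close>] by simp
qed

lemma proj_pyth: "norm v ^ 2 = norm (proj V v) ^ 2 + norm (v - proj V v) ^ 2"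
proof -
  have o: "inner (v - proj V v) (proj V v) = 0" using proj by blast
  have "norm (proj V v + (v - proj V v)) ^ 2 = norm (proj V v) ^ 2 + norm (v - proj V v) ^ 2"
    by (rule pyth_orth) (metis o inner_commute)
  then show ?thesis by simp
qed

lemma proj_norm: "norm (proj V v) \<le> norm v"
  using proj_pyth[of v] by (metis abs_norm_cancel le_add_same_cancel1 zero_le_power2 power2_le_imp_le norm_ge_zero)

lemma proj_bl: "bounded_linear (proj V)"
  by (rule bounded_linear_intro[of _ 1]) (auto simp: proj_add proj_scale proj_norm)

end

lemma orthonormal_seq_exists:
  fixes B :: "'v::real_inner set"
  assumes "infinite B" "independent B"
  shows "\<exists>e::nat \<Rightarrow> 'v. (\<forall>i j. i \<noteq> j \<longrightarrow> inner (e i) (e j) = 0) \<and> (\<forall>i. inner (e i) (e i) = 1)"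
proof -
  obtain f :: "nat \<Rightarrow> 'v" where f: "inj f" "range f \<subseteq> B" using infinite_countable_subset assms(1) by blast
  have inspan: "gs f j \<in> span (f ` {..j})" for j
  proof (induct j rule: less_induct)
    case (less j)
    have "gsres f j \<in> span (f ` {..j})"
      unfolding gsres_def
    proof (rule span_diff)
      show "f j \<in> span (f ` {..j})" by (rule span_base) auto
      show "(\<Sum>i<j. inner (f j) (gs f i) *\<^sub>R gs f i) \<in> span (f ` {..j})"
      proof (rule span_sum)
        fix i assume i: "i \<in> {..<j}"
        have "gs f i \<in> span (f ` {..i})" using less i by auto
        also have "span (f ` {..i}) \<subseteq> span (f ` {..j})" using i by (intro span_mono) auto
        finally show "inner (f j) (gs f i) *\<^sub>R gs f i \<in> span (f ` {..j})" by (rule span_mul)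
      qed
    qed
    then show ?case unfolding gs_def2[of f j] by (rule span_mul)
  qed
  have nz: "gsres f n \<noteq> 0" for n
  proof
    assume z: "gsres f n = 0"
    have "f n = (\<Sum>i<n. inner (f n) (gs f i) *\<^sub>R gs f i)" using z unfolding gsres_def by simp
    also have "\<dots> \<in> span (f ` {..<n})"
    proof (rule span_sum)
      fix i assume i: "i \<in> {..<n}"
      have "gs f i \<in> span (f ` {..i})" by (rule inspan)
      also have "span (f ` {..i}) \<subseteq> span (f ` {..<n})" using i by (intro span_mono) auto
      finally show "inner (f n) (gs f i) *\<^sub>R gs f i \<in> span (f ` {..<n})" by (rule span_mul)
    qed
    also have "span (f ` {..<n}) \<subseteq> span (B - {f n})"
      using f by (intro span_mono) (auto simp: inj_eq)
    finally have "f n \<in> span (B - {f n})" .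
    then have "dependent B" unfolding dependent_def using f by auto
    then show False using assms(2) by simp
  qed
  show ?thesis
  proof (intro exI[of _ "gs f"] conjI allI impI)
    fix i j :: nat assume "i \<noteq> j" then show "inner (gs f i) (gs f j) = 0" by (rule gs_inner_ne)
  next
    fix i
    have "gs f i \<noteq> 0" using nz[of i] by (simp add: gs_def2[of f i])
    then show "inner (gs f i) (gs f i) = 1" by (simp add: gs_inner_self)
  qed
qed



section \<open>Gromov-type lemma\<close>

lemma gromov:
  fixes F :: "'v::{real_normed_vector,complete_space} \<Rightarrow> real"
  assumes cont: "continuous_on UNIV F" and pos: "\<And>v. F v > 0"
    and eps: "0 < \<epsilon>" "\<epsilon> < 1" and R: "0 < R"
  shows "\<exists>p. \<forall>w. norm (w - p) \<le> R * F p \<longrightarrow> (1 - \<epsilon>) * F p \<le> F w"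
proof (rule ccontr)
  assume "\<not> ?thesis"
  then have "\<forall>p. \<exists>w. norm (w - p) \<le> R * F p \<and> F w < (1 - \<epsilon>) * F p"
    by (auto simp: not_le)
  then obtain nx where nx: "\<And>p. norm (nx p - p) \<le> R * F p" "\<And>p. F (nx p) < (1 - \<epsilon>) * F p"
    by metis
  define q where "q = 1 - \<epsilon>"
  have q: "0 < q" "q < 1" using eps unfolding q_def by auto
  define p0 where "p0 = (0::'v)"
  define p where "p k = (nx ^^ k) p0" for k
  have pS: "p (Suc k) = nx (p k)" for k unfolding p_def by simp
  have Fp: "F (p k) \<le> q ^ k * F p0" for k
  proof (induct k)
    case 0 then show ?case by (simp add: p_def)
  next
    case (Suc k)
    have "F (p (Suc k)) \<le> q * F (p k)" using nx(2)[of "p k"] unfolding pS q_def by simp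
    also have "\<dots> \<le> q * (q ^ k * F p0)" using Suc q by (intro mult_left_mono) auto
    finally show ?case by simp
  qed
  have step: "norm (p (Suc k) - p k) \<le> R * F p0 * q ^ k" for k
  proof -
    have "norm (p (Suc k) - p k) \<le> R * F (p k)" using nx(1)[of "p k"] by (simp add: pS)
    also have "\<dots> \<le> R * (q ^ k * F p0)" using Fp[of k] R by (intro mult_left_mono) auto
    finally show ?thesis by (simp add: mult_ac)
  qed
  have dist: "norm (p m - p n) \<le> R * F p0 * (q ^ n - q ^ m) / (1 - q)" if "n \<le> m" for n m
    using that
  proof (induct m)
    case 0 then show ?case by simp
  next
    case (Suc m)
    show ?case
    proof (cases "n = Suc m")
      case True then show ?thesis by simp
    next
      case False
      then have nm: "n \<le> m" using Suc by simp
      have e: "p (Suc m) - p n = (p (Suc m) - p m) + (p m - p n)" by simp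
      have "norm (p (Suc m) - p n) \<le> norm (p (Suc m) - p m) + norm (p m - p n)"
        by (subst e) (rule norm_triangle_ineq)
      also have "\<dots> \<le> R * F p0 * q ^ m + R * F p0 * (q ^ n - q ^ m) / (1 - q)"
        using step[of m] Suc(1)[OF nm] by simp
      also have "\<dots> = R * F p0 * (q ^ n - q ^ Suc m) / (1 - q)"
        using q by (simp add: field_simps)
      finally show ?thesis .
    qed
  qed
  have qn: "(\<lambda>n. q ^ n) \<longlonglongrightarrow> 0" using q by (intro LIMSEQ_power_zero) auto
  have "Cauchy p"
  proof (rule CauchyI)
    fix e :: real assume e: "0 < e"
    have c: "0 < R * F p0 / (1 - q)" using R pos q by simp
    have "\<forall>\<^sub>F n in sequentially. q ^ n < e / (R * F p0 / (1 - q))"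
      using qn e c q R pos[of p0] by (intro order_tendstoD) (auto intro!: divide_pos_pos)
    then obtain M where M: "\<And>n. n \<ge> M \<Longrightarrow> q ^ n < e / (R * F p0 / (1 - q))"
      by (auto simp: eventually_sequentially)
    have bnd: "norm (p m - p n) < e" if "M \<le> n" "n \<le> m" for m n
    proof -
      have "norm (p m - p n) \<le> R * F p0 * (q ^ n - q ^ m) / (1 - q)" using dist that by simp
      also have "\<dots> \<le> R * F p0 * q ^ n / (1 - q)"
        using q R pos[of p0] by (intro divide_right_mono mult_left_mono) auto
      also have "\<dots> = (R * F p0 / (1 - q)) * q ^ n" by simp
      also have "\<dots> < (R * F p0 / (1 - q)) * (e / (R * F p0 / (1 - q)))"
        using M[OF that(1)] c by (intro mult_strict_left_mono) auto
      also have "\<dots> = e" using c by (metis div_by_0 less_irrefl nonzero_mult_div_cancel_left times_divide_eq_right)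
      finally show ?thesis .
    qed
    show "\<exists>M. \<forall>m\<ge>M. \<forall>n\<ge>M. norm (p m - p n) < e"
    proof (intro exI allI impI)
      fix m n assume "M \<le> m" "M \<le> n"
      then show "norm (p m - p n) < e"
      proof (cases "n \<le> m")
        case True then show ?thesis using bnd[of n m] \<open>M \<le> n\<close> by blast
      next
        case False
        then have "norm (p n - p m) < e" using bnd[of m n] \<open>M \<le> m\<close> by simp
        then show ?thesis by (simp only: norm_minus_commute)
      qed
    qed
  qed
  then have "convergent p" by (simp add: Cauchy_convergent_iff)
  then obtain l where l: "p \<longlonglongrightarrow> l" unfolding convergent_def by blast
  have "(\<lambda>k. F (p k)) \<longlonglongrightarrow> F l"
    using continuous_on_tendsto_compose[OF cont l] by simp
  moreover have "(\<lambda>k. q ^ k * F p0) \<longlonglongrightarrow> 0 * F p0" by (intro tendsto_intros qn)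
  ultimately have "F l \<le> 0 * F p0" using Fp by (intro LIMSEQ_le) auto
  then show False using pos[of l] by simp
qed



lemma bounded_real_subseq:
  fixes f :: "nat \<Rightarrow> real"
  assumes "\<And>n. \<bar>f n\<bar> \<le> K"
  shows "\<exists>r. strict_mono r \<and> convergent (f \<circ> r)"
proof -
  obtain r where r: "strict_mono r" "monoseq (\<lambda>n. f (r n))" using seq_monosub by blast
  have "Bseq (\<lambda>n. f (r n))" using assms by (intro BseqI'[of _ K]) auto
  then have "convergent (\<lambda>n. f (r n))" using r(2) Bseq_monoseq_convergent by blast
  then show ?thesis using r(1) by (auto simp: o_def)
qed

lemma diagonal_convergent:
  fixes c :: "nat \<Rightarrow> nat \<Rightarrow> nat \<Rightarrow> real"
  assumes bnd: "\<And>i j. \<exists>K. \<forall>n. \<bar>c n i j\<bar> \<le> K"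
  shows "\<exists>r. strict_mono r \<and> (\<forall>i j. convergent (\<lambda>m. c (r m) i j))"
proof -
  define P where "P k s \<longleftrightarrow> convergent (\<lambda>m. c (s m) (fst (prod_decode k)) (snd (prod_decode k)))"
    for k and s :: "nat \<Rightarrow> nat"
  interpret subseqs P
  proof
    fix k and s :: "nat \<Rightarrow> nat" assume s: "strict_mono s"
    obtain K where K: "\<And>n. \<bar>c n (fst (prod_decode k)) (snd (prod_decode k))\<bar> \<le> K"
      using bnd by blast
    obtain r' where "strict_mono r'"
      "convergent ((\<lambda>m. c (s m) (fst (prod_decode k)) (snd (prod_decode k))) \<circ> r')"
      using bounded_real_subseq[of "\<lambda>m. c (s m) (fst (prod_decode k)) (snd (prod_decode k))" K] K
      by blast
    then show "\<exists>r'. strict_mono r' \<and> P k (s \<circ> r')" unfolding P_def by (auto simp: o_def)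
  qed
  have stable: "P k (s \<circ> r)" if "strict_mono r" "P k s" for r s k
    using convergent_subseq_convergent[of "\<lambda>m. c (s m) (fst (prod_decode k)) (snd (prod_decode k))" r] that
    unfolding P_def by (simp add: o_def)
  have all: "convergent (\<lambda>m. c (diagseq m) i j)" for i j
  proof -
    define k where "k = prod_encode (i, j)"
    have "P k (diagseq \<circ> ((+) (Suc k)))" by (rule diagseq_holds) (rule stable)
    then have "convergent (\<lambda>m. c (diagseq (m + Suc k)) i j)"
      unfolding P_def k_def by (simp add: o_def add.commute)
    then obtain l where "(\<lambda>m. c (diagseq (m + Suc k)) i j) \<longlonglongrightarrow> l" unfolding convergent_def by blast
    then have "(\<lambda>m. c (diagseq m) i j) \<longlonglongrightarrow> l" by (rule LIMSEQ_offset)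
    then show ?thesis unfolding convergent_def by blast
  qed
  show ?thesis using subseq_diagseq all by blast
qed

lemma limit_realize:
  fixes u :: "nat \<Rightarrow> 'i \<Rightarrow> 'v::real_inner" and C :: "'i set" and e :: "nat \<Rightarrow> 'w::real_inner"
  assumes C: "countable C" "C \<noteq> {}" and bnd: "\<And>\<gamma>. \<gamma> \<in> C \<Longrightarrow> \<exists>K. \<forall>n. norm (u n \<gamma>) \<le> K"
    and e1: "\<And>i j. i \<noteq> j \<Longrightarrow> inner (e i) (e j) = 0" and e2: "\<And>i. inner (e i) (e i) = 1"
  shows "\<exists>r (z::'i \<Rightarrow> 'w). strict_mono r \<and>
     (\<forall>\<gamma>\<in>C. \<forall>\<delta>\<in>C. (\<lambda>n. inner (u (r n) \<gamma>) (u (r n) \<delta>)) \<longlonglongrightarrow> inner (z \<gamma>) (z \<delta>))"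
proof -
  define idx where "idx = from_nat_into C"
  have idxC: "idx i \<in> C" for i unfolding idx_def using C by (simp add: from_nat_into)
  define d where "d n k = u n (idx k)" for n k
  define cn where "cn n i j = inner (d n i) (gs (d n) j)" for n i j
  have cb: "\<exists>K. \<forall>n. \<bar>cn n i j\<bar> \<le> K" for i j
  proof -
    obtain K where K: "\<And>n. norm (u n (idx i)) \<le> K" using bnd[OF idxC[of i]] by blast
    show ?thesis unfolding cn_def d_def
      by (rule exI[of _ K]) (metis K gs_coeff_bound order_trans)
  qed
  obtain r where r: "strict_mono r" "\<And>i j. convergent (\<lambda>m. cn (r m) i j)"
    using diagonal_convergent[of cn] cb by blast
  define Cl where "Cl i j = lim (\<lambda>m. cn (r m) i j)" for i j
  have Cl: "(\<lambda>m. cn (r m) i j) \<longlonglongrightarrow> Cl i j" for i j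
    unfolding Cl_def using r(2) convergent_LIMSEQ_iff by blast
  have Cl0: "Cl i j = 0" if "i < j" for i j
  proof -
    have "(\<lambda>m. cn (r m) i j) = (\<lambda>m. 0)" unfolding cn_def using that gs_coeff_zero by metis
    then show ?thesis using Cl[of i j] LIMSEQ_unique tendsto_const by metis
  qed
  define Z where "Z i = (\<Sum>j\<le>i. Cl i j *\<^sub>R e j)" for i
  have ZN: "Z i = (\<Sum>j\<le>N. Cl i j *\<^sub>R e j)" if "i \<le> N" for i N
    unfolding Z_def by (rule sum.mono_neutral_left) (use that Cl0 in auto)
  have Zi: "(\<lambda>m. inner (d (r m) i) (d (r m) i')) \<longlonglongrightarrow> inner (Z i) (Z i')" for i i'
  proof -
    define N where "N = max i i'"
    have "inner (Z i) (Z i') = inner (\<Sum>j\<le>N. Cl i j *\<^sub>R e j) (\<Sum>j\<le>N. Cl i' j *\<^sub>R e j)"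
      using ZN[of i N] ZN[of i' N] N_def by simp
    also have "\<dots> = (\<Sum>j\<le>N. Cl i j * Cl i' j)"
      by (rule orthonormal_sum_inner) (use e1 e2 in auto)
    finally have "inner (Z i) (Z i') = (\<Sum>j\<le>N. Cl i j * Cl i' j)" .
    moreover have "(\<lambda>m. inner (d (r m) i) (d (r m) i')) = (\<lambda>m. \<Sum>j\<le>N. cn (r m) i j * cn (r m) i' j)"
      unfolding cn_def N_def by (intro ext gs_inner_formula) auto
    moreover have "(\<lambda>m. \<Sum>j\<le>N. cn (r m) i j * cn (r m) i' j) \<longlonglongrightarrow> (\<Sum>j\<le>N. Cl i j * Cl i' j)"
      by (intro tendsto_intros Cl)
    ultimately show ?thesis by simp
  qed
  define z where "z \<gamma> = Z (to_nat_on C \<gamma>)" for \<gamma>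
  have "(\<lambda>n. inner (u (r n) \<gamma>) (u (r n) \<delta>)) \<longlonglongrightarrow> inner (z \<gamma>) (z \<delta>)"
    if g: "\<gamma> \<in> C" and dl: "\<delta> \<in> C" for \<gamma> \<delta>
  proof -
    have "idx (to_nat_on C \<gamma>) = \<gamma>" "idx (to_nat_on C \<delta>) = \<delta>" unfolding idx_def using C g dl by auto
    then show ?thesis
      using Zi[of "to_nat_on C \<gamma>" "to_nat_on C \<delta>"] unfolding z_def d_def by simp
  qed
  note lim = this
  show ?thesis
    apply (rule exI[of _ r])
    apply (rule_tac x=z in exI)
    using r(1) lim by simp
qed



definition Eg :: "('g, 'c) monoid_scheme \<Rightarrow> 'g set \<Rightarrow> 'g \<Rightarrow> ('g \<Rightarrow> 'v \<Rightarrow> 'v::real_normed_vector) \<Rightarrow> 'v \<Rightarrow> real" where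
  "Eg G S x \<rho> v = (1 / (2 * real (card S))) * (\<Sum>s\<in>S. (norm (\<rho> x v - \<rho> (x \<otimes>\<^bsub>G\<^esub> s) v))\<^sup>2)"

lemma equivariant_orbit:
  assumes "group G" "equivariant G \<rho> f" "y \<in> carrier G"
  shows "f y = \<rho> y (f \<one>\<^bsub>G\<^esub>)"
  using assms unfolding equivariant_def by (metis group.is_monoid monoid.one_closed monoid.r_one)

lemma energy_orbit:
  assumes "group G" "equivariant G \<rho> f" "x \<in> carrier G" "S \<subseteq> carrier G"
  shows "local_energy G S f x = Eg G S x \<rho> (f \<one>\<^bsub>G\<^esub>)"
proof -
  have "\<And>s. s \<in> S \<Longrightarrow> f (x \<otimes>\<^bsub>G\<^esub> s) = \<rho> (x \<otimes>\<^bsub>G\<^esub> s) (f \<one>\<^bsub>G\<^esub>)"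
  proof -
    fix s assume "s \<in> S"
    then have "x \<otimes>\<^bsub>G\<^esub> s \<in> carrier G"
      using assms(3,4) monoid.m_closed[OF group.is_monoid[OF assms(1)]] by blast
    then show "f (x \<otimes>\<^bsub>G\<^esub> s) = \<rho> (x \<otimes>\<^bsub>G\<^esub> s) (f \<one>\<^bsub>G\<^esub>)"
      by (rule equivariant_orbit[OF assms(1,2)])
  qed
  moreover have "f x = \<rho> x (f \<one>\<^bsub>G\<^esub>)" by (rule equivariant_orbit[OF assms(1-3)])
  ultimately show ?thesis unfolding local_energy_def Eg_def by simp
qed

lemma orbit_equivariant:
  assumes "group G" "affine_action G A b"
  shows "equivariant G (aff A b) (\<lambda>y. aff A b y v)"
  using assms unfolding equivariant_def affine_action_def by auto

lemma (in group) foldr_append_prod: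
  assumes "set l \<subseteq> carrier G" "set m \<subseteq> carrier G"
  shows "foldr (\<otimes>) (l @ m) \<one> = foldr (\<otimes>) l \<one> \<otimes> foldr (\<otimes>) m \<one>"
proof -
  have fc: "\<And>l. set l \<subseteq> carrier G \<Longrightarrow> foldr (\<otimes>) l \<one> \<in> carrier G"
  proof -
    fix l :: "'a list" show "set l \<subseteq> carrier G \<Longrightarrow> foldr (\<otimes>) l \<one> \<in> carrier G"
      by (induct l) auto
  qed
  show ?thesis using assms(1) by (induct l) (auto simp: m_assoc fc[OF assms(2)] fc)
qed

lemma (in group) generate_words:
  assumes "S \<subseteq> carrier G" "\<forall>s\<in>S. inv s \<in> S"
  shows "generate G S \<subseteq> (\<lambda>ws. foldr (\<otimes>) ws \<one>) ` lists S"
proof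
  fix h assume "h \<in> generate G S"
  then show "h \<in> (\<lambda>ws. foldr (\<otimes>) ws \<one>) ` lists S"
  proof induct
    case one then show ?case by (auto intro!: image_eqI[of _ _ "[]"])
  next
    case (incl h) then show ?case using assms by (auto intro!: image_eqI[of _ _ "[h]"])
  next
    case (inv h) then show ?case using assms by (auto intro!: image_eqI[of _ _ "[inv h]"])
  next
    case (eng h1 h2)
    then obtain w1 w2 where w: "w1 \<in> lists S" "w2 \<in> lists S" "h1 = foldr (\<otimes>) w1 \<one>" "h2 = foldr (\<otimes>) w2 \<one>"
      by auto
    have "foldr (\<otimes>) (w1 @ w2) \<one> = h1 \<otimes> h2"
      using w assms(1) by (subst foldr_append_prod) auto
    then show ?case using w by (auto intro!: image_eqI[of _ _ "w1 @ w2"])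
  qed
qed

locale setting = group G for G :: "('g, 'c) monoid_scheme" (structure) +
  fixes S :: "'g set"
    and A :: "'g \<Rightarrow> ('a::{real_inner,complete_space} \<Rightarrow>\<^sub>L 'a)" and b :: "'g \<Rightarrow> 'a" and x :: 'g
  assumes finS: "finite S" and SG: "S \<subseteq> carrier G"
    and symS: "\<forall>s\<in>S. inv\<^bsub>G\<^esub> s \<in> S" and gen: "generate G S = carrier G"
    and act: "affine_action G A b" and nofix: "\<not> has_fixed_point G (aff A b)"
    and xG: "x \<in> carrier G"
begin

lemma grp: "group G" by (rule group_axioms)

abbreviation "\<rho> \<equiv> aff A b"

definition E :: "'a \<Rightarrow> real" where "E v = Eg G S x \<rho> v"
definition F :: "'a \<Rightarrow> real" where "F v = sqrt (E v)"

lemma rho_mult: "g \<in> carrier G \<Longrightarrow> h \<in> carrier G \<Longrightarrow> \<rho> (g \<otimes> h) v = \<rho> g (\<rho> h v)"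
  using act unfolding affine_action_def by auto

lemma rho_one: "\<rho> \<one> v = v"
  using act unfolding affine_action_def by auto

lemma rho_inv: "g \<in> carrier G \<Longrightarrow> \<rho> (inv g) (\<rho> g v) = v"
  by (metis inv_closed l_inv rho_mult rho_one)

lemma S_ne: "S \<noteq> {}"
proof
  assume "S = {}"
  then have "carrier G = {\<one>}" using gen generate_empty by auto
  then have "has_fixed_point G \<rho>" unfolding has_fixed_point_def using rho_one by auto
  then show False using nofix by simp
qed

lemma cardS: "card S > 0" using S_ne finS by (simp add: card_gt_0_iff)

lemma carrier_countable: "countable (carrier G)"
proof -
  have "countable ((\<lambda>ws. foldr (\<otimes>) ws \<one>) ` lists S)"
    using finS by (intro countable_image countable_lists countable_finite) auto
  then show ?thesis using generate_words[OF SG symS] gen countable_subset by metis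
qed

lemma rho_cont: "continuous_on UNIV (\<rho> g)"
  unfolding aff_def by (intro continuous_intros)

lemma E_cont: "continuous_on UNIV E"
  unfolding E_def Eg_def aff_def by (intro continuous_intros)

lemma F_cont: "continuous_on UNIV F"
  unfolding F_def by (intro continuous_intros E_cont)

lemma E_pos: "E v > 0"
proof (rule ccontr)
  assume "\<not> E v > 0"
  moreover have "E v \<ge> 0" unfolding E_def Eg_def by (intro mult_nonneg_nonneg sum_nonneg) auto
  ultimately have E0: "E v = 0" by simp
  have "(\<Sum>s\<in>S. (norm (\<rho> x v - \<rho> (x \<otimes> s) v))\<^sup>2) = 0"
    using E0 cardS unfolding E_def Eg_def by simp
  then have z: "\<And>s. s \<in> S \<Longrightarrow> (norm (\<rho> x v - \<rho> (x \<otimes> s) v))\<^sup>2 = 0"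
    using finS by (subst (asm) sum_nonneg_eq_0_iff) auto
  have fixS: "\<rho> s v = v" if "s \<in> S" for s
  proof -
    have sG: "s \<in> carrier G" using that SG by auto
    have "\<rho> x v = \<rho> x (\<rho> s v)" using z[OF that] rho_mult[OF xG sG] by simp
    then have "\<rho> (inv x) (\<rho> x v) = \<rho> (inv x) (\<rho> x (\<rho> s v))" by simp
    then show ?thesis using rho_inv[OF xG] by simp
  qed
  have "\<rho> g v = v" if "g \<in> generate G S" for g
    using that
  proof induct
    case one then show ?case by (rule rho_one)
  next
    case (incl h) then show ?case by (rule fixS)
  next
    case (inv h) then show ?case using fixS[of h] rho_inv[of h v] SG by auto
  next
    case (eng h1 h2)
    then have "h1 \<in> carrier G" "h2 \<in> carrier G" using gen by auto
    then show ?case using eng rho_mult by simp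
  qed
  then have "has_fixed_point G \<rho>" unfolding has_fixed_point_def using gen by auto
  then show False using nofix by simp
qed

lemma F_pos: "F v > 0" unfolding F_def using E_pos by simp

lemma F_sq: "(F v)\<^sup>2 = E v" unfolding F_def using E_pos[of v] by simp

lemma rho_diff: "g \<in> carrier G \<Longrightarrow> \<rho> g u - \<rho> g v = blinfun_apply (A g) (u - v)"
  unfolding aff_def by (simp add: blinfun.diff_right)

definition D :: "'a \<Rightarrow> 'g \<Rightarrow> 'a" where "D p g = \<rho> g p - p"

lemma D_mult: "g \<in> carrier G \<Longrightarrow> h \<in> carrier G \<Longrightarrow> D p (g \<otimes> h) = blinfun_apply (A g) (D p h) + D p g"
  unfolding D_def using rho_mult rho_diff by (simp add: algebra_simps)

lemma D_gen_bound: "s \<in> S \<Longrightarrow> norm (D p s) \<le> norm (A (inv x)) * sqrt (2 * real (card S)) * F p"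
proof -
  assume s: "s \<in> S"
  have sG: "s \<in> carrier G" using s SG by auto
  have "D p s = blinfun_apply (A (inv x)) (\<rho> x (\<rho> s p) - \<rho> x p)"
    unfolding D_def using rho_diff[OF xG] aff_action_inv(2)[OF act xG] by simp
  then have "norm (D p s) \<le> norm (A (inv x)) * norm (\<rho> (x \<otimes> s) p - \<rho> x p)"
    using rho_mult[OF xG sG] norm_blinfun by metis
  also have "norm (\<rho> (x \<otimes> s) p - \<rho> x p) \<le> sqrt (2 * real (card S)) * F p"
  proof -
    have "(norm (\<rho> x p - \<rho> (x \<otimes> s) p))\<^sup>2 \<le> (\<Sum>t\<in>S. (norm (\<rho> x p - \<rho> (x \<otimes> t) p))\<^sup>2)"
      using s finS by (intro member_le_sum) auto
    also have "\<dots> = 2 * real (card S) * E p" unfolding E_def Eg_def using cardS by simp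
    also have "\<dots> = (sqrt (2 * real (card S)) * F p)\<^sup>2"
      using F_sq[of p] by (simp add: power_mult_distrib)
    finally have "(norm (\<rho> x p - \<rho> (x \<otimes> s) p))\<^sup>2 \<le> (sqrt (2 * real (card S)) * F p)\<^sup>2" .
    then have "norm (\<rho> x p - \<rho> (x \<otimes> s) p) \<le> sqrt (2 * real (card S)) * F p"
      by (rule power2_le_imp_le) (use F_pos[of p] in \<open>simp add: less_imp_le\<close>)
    moreover have "norm (\<rho> (x \<otimes> s) p - \<rho> x p) = norm (\<rho> x p - \<rho> (x \<otimes> s) p)"
      by (rule norm_minus_commute)
    ultimately show ?thesis by simp
  qed
  finally show ?thesis by (simp add: mult_left_mono mult.assoc)
qed

lemma D_bound: "g \<in> carrier G \<Longrightarrow> \<exists>K. \<forall>p. norm (D p g) \<le> K * F p"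
proof -
  assume "g \<in> carrier G"
  then have "g \<in> generate G S" using gen by simp
  then show ?thesis
  proof induct
    case one then show ?case by (intro exI[of _ 0]) (simp add: D_def rho_one)
  next
    case (incl h) then show ?case using D_gen_bound by blast
  next
    case (inv h) then show ?case using D_gen_bound symS by blast
  next
    case (eng h1 h2)
    then obtain K1 K2 where K1: "\<And>p. norm (D p h1) \<le> K1 * F p" and K2: "\<And>p. norm (D p h2) \<le> K2 * F p"
      by blast
    have hG: "h1 \<in> carrier G" "h2 \<in> carrier G" using eng gen by auto
    show ?case
    proof (intro exI allI)
      fix p
      have "norm (D p (h1 \<otimes> h2)) \<le> norm (blinfun_apply (A h1) (D p h2)) + norm (D p h1)"
        unfolding D_mult[OF hG] by (rule norm_triangle_ineq)
      also have "\<dots> \<le> norm (A h1) * (K2 * F p) + K1 * F p"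
        using K1[of p] K2[of p] norm_blinfun[of "A h1" "D p h2"]
        by (meson add_mono mult_left_mono norm_ge_zero order_trans)
      finally show "norm (D p (h1 \<otimes> h2)) \<le> (norm (A h1) * K2 + K1) * F p"
        by (simp add: algebra_simps)
    qed
  qed
qed

end



definition comb :: "('g \<Rightarrow> 'v::real_vector) \<Rightarrow> (real \<times> 'g) list \<Rightarrow> 'v" where
  "comb f L = sum_list (map (\<lambda>(c, g). c *\<^sub>R f g) L)"

lemma comb_Nil[simp]: "comb f [] = 0" by (simp add: comb_def)
lemma comb_Cons[simp]: "comb f ((c, g) # L) = c *\<^sub>R f g + comb f L" by (simp add: comb_def)
lemma comb_append[simp]: "comb f (L @ M) = comb f L + comb f M" by (simp add: comb_def)

definition negl :: "(real \<times> 'g) list \<Rightarrow> (real \<times> 'g) list" where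
  "negl L = map (\<lambda>(c, g). (- c, g)) L"

lemma comb_negl[simp]: "comb f (negl L) = - comb f L"
  by (induct L) (auto simp: negl_def)

definition scl :: "real \<Rightarrow> (real \<times> 'g) list \<Rightarrow> (real \<times> 'g) list" where
  "scl a L = map (\<lambda>(c, g). (a * c, g)) L"

lemma comb_scl[simp]: "comb f (scl a L) = a *\<^sub>R comb f L"
  by (induct L) (auto simp: scl_def scaleR_add_right)

lemma comb_linear:
  assumes "bounded_linear T"
  shows "T (comb f L) = comb (\<lambda>g. T (f g)) L"
proof (induct L)
  case Nil then show ?case using linear_simps(3)[OF assms] by simp
next
  case (Cons a L) then show ?case
    using linear_simps(1,5)[OF assms] by (cases a) auto
qed

lemma comb_add_fun: "comb (\<lambda>g. f g + h g) L = comb f L + comb h L"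
  by (induct L) (auto simp: scaleR_add_right)

lemma comb_scale_fun: "comb (\<lambda>g. a *\<^sub>R f g) L = a *\<^sub>R comb f L"
  by (induct L) (auto simp: scaleR_add_right)

lemma comb_const: "comb (\<lambda>g. v) L = sum_list (map fst L) *\<^sub>R v"
  by (induct L) (auto simp: scaleR_add_left)

lemma negl_lists: "L \<in> lists (UNIV \<times> C) \<Longrightarrow> negl L \<in> lists (UNIV \<times> C)"
  by (induct L) (auto simp: negl_def)

lemma scl_lists: "L \<in> lists (UNIV \<times> C) \<Longrightarrow> scl a L \<in> lists (UNIV \<times> C)"
  by (induct L) (auto simp: scl_def)

lemma comb_cong_lists:
  assumes "\<And>k. k \<in> C \<Longrightarrow> f k = f' k" "L \<in> lists (UNIV \<times> C)"
  shows "comb f L = comb f' L"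
  using assms(2) by (induct L) (auto simp: assms(1))

context setting
begin

definition shl :: "'g \<Rightarrow> (real \<times> 'g) list \<Rightarrow> (real \<times> 'g) list" where
  "shl g L = map (\<lambda>(c, h). (c, g \<otimes> h)) L @ [(- sum_list (map fst L), g)]"

lemma comb_shl: "comb f (shl g L) = comb (\<lambda>h. f (g \<otimes> h) - f g) L"
proof -
  have m: "comb f (map (\<lambda>(c, h). (c, g \<otimes> h)) L) = comb (\<lambda>h. f (g \<otimes> h)) L"
    by (induct L) auto
  have "comb (\<lambda>h. f (g \<otimes> h) - f g) L = comb (\<lambda>h. f (g \<otimes> h)) L - comb (\<lambda>h. f g) L"
    by (induct L) (auto simp: algebra_simps)
  then show ?thesis unfolding shl_def using m by (simp add: comb_const)
qed

lemma shl_lists: "g \<in> carrier G \<Longrightarrow> L \<in> lists (UNIV \<times> carrier G) \<Longrightarrow> shl g L \<in> lists (UNIV \<times> carrier G)"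
  by (induct L) (auto simp: shl_def)

lemma sum_fst_shl: "sum_list (map fst (shl g L)) = 0"
  by (simp add: shl_def o_def case_prod_unfold)

lemma shl_shl:
  assumes "g \<in> carrier G" "h \<in> carrier G" "L \<in> lists (UNIV \<times> carrier G)"
  shows "comb f (shl g (shl h L)) = comb f (shl (g \<otimes> h) L)"
proof -
  have "comb f (shl g (shl h L)) = comb (\<lambda>k. f (g \<otimes> k) - f g) (shl h L)" by (rule comb_shl)
  also have "\<dots> = comb (\<lambda>k. f (g \<otimes> (h \<otimes> k)) - f g - (f (g \<otimes> h) - f g)) L"
    by (rule comb_shl)
  also have "\<dots> = comb (\<lambda>k. f ((g \<otimes> h) \<otimes> k) - f (g \<otimes> h)) L"
    using assms by (intro comb_cong_lists) (auto simp: m_assoc)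
  also have "\<dots> = comb f (shl (g \<otimes> h) L)" by (rule comb_shl[symmetric])
  finally show ?thesis .
qed

end



locale lim_setting = setting G S A b x
  for G :: "('g, 'c) monoid_scheme" (structure) and S
    and A :: "'g \<Rightarrow> ('v::{real_inner,complete_space} \<Rightarrow>\<^sub>L 'v)" and b x +
  fixes p :: "nat \<Rightarrow> 'v" and r :: "nat \<Rightarrow> nat" and z :: "'g \<Rightarrow> 'h::{real_inner,complete_space}"
  assumes gro: "\<And>n w. norm (w - p n) \<le> (real n + 1) * F (p n) \<Longrightarrow> (1 - 1 / (real n + 2)) * F (p n) \<le> F w"
    and r_mono: "strict_mono r"
    and zlim: "\<And>g h. g \<in> carrier G \<Longrightarrow> h \<in> carrier G \<Longrightarrow>
       (\<lambda>n. inner ((1 / F (p (r n))) *\<^sub>R D (p (r n)) g) ((1 / F (p (r n))) *\<^sub>R D (p (r n)) h))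
         \<longlonglongrightarrow> inner (z g) (z h)"
begin

definition U :: "nat \<Rightarrow> 'g \<Rightarrow> 'v" where "U n g = (1 / F (p n)) *\<^sub>R D (p n) g"

abbreviation "Lc \<equiv> lists (UNIV \<times> carrier G)"

lemma U_mult: "g \<in> carrier G \<Longrightarrow> h \<in> carrier G \<Longrightarrow> U n (g \<otimes> h) = blinfun_apply (A g) (U n h) + U n g"
  unfolding U_def by (simp add: D_mult blinfun.scaleR_right scaleR_add_right)

lemma U_one: "U n \<one> = 0" unfolding U_def D_def by (simp add: rho_one)

lemma comb_U_shl:
  assumes "g \<in> carrier G" "L \<in> Lc"
  shows "comb (U n) (shl g L) = blinfun_apply (A g) (comb (U n) L)"
proof -
  have "comb (U n) (shl g L) = comb (\<lambda>h. U n (g \<otimes> h) - U n g) L" by (rule comb_shl)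
  also have "\<dots> = comb (\<lambda>h. blinfun_apply (A g) (U n h)) L"
    using assms by (intro comb_cong_lists[where C = "carrier G"]) (auto simp: U_mult)
  also have "\<dots> = blinfun_apply (A g) (comb (U n) L)"
    by (rule comb_linear[symmetric]) (rule blinfun.bounded_linear_right)
  finally show ?thesis .
qed

lemma zlim': "g \<in> carrier G \<Longrightarrow> h \<in> carrier G \<Longrightarrow> (\<lambda>n. inner (U (r n) g) (U (r n) h)) \<longlonglongrightarrow> inner (z g) (z h)"
  using zlim unfolding U_def by simp

lemma comb_lim1:
  assumes "g \<in> carrier G"
  shows "M \<in> Lc \<Longrightarrow> (\<lambda>n. inner (U (r n) g) (comb (U (r n)) M)) \<longlonglongrightarrow> inner (z g) (comb z M)"
proof (induct M)
  case Nil then show ?case by simp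
next
  case (Cons a M)
  obtain c h where a: "a = (c, h)" by (cases a)
  have h: "h \<in> carrier G" and M: "M \<in> Lc" using Cons.prems a by auto
  have "(\<lambda>n. c * inner (U (r n) g) (U (r n) h) + inner (U (r n) g) (comb (U (r n)) M))
      \<longlonglongrightarrow> c * inner (z g) (z h) + inner (z g) (comb z M)"
    by (intro tendsto_intros zlim'[OF assms(1) h] Cons.hyps M)
  then show ?case using a by (simp add: inner_add_right)
qed

lemma comb_lim:
  assumes "M \<in> Lc"
  shows "L \<in> Lc \<Longrightarrow> (\<lambda>n. inner (comb (U (r n)) L) (comb (U (r n)) M)) \<longlonglongrightarrow> inner (comb z L) (comb z M)"
proof (induct L)
  case Nil then show ?case by simp
next
  case (Cons a L)
  obtain c h where a: "a = (c, h)" by (cases a)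
  have h: "h \<in> carrier G" and L: "L \<in> Lc" using Cons.prems a by auto
  have "(\<lambda>n. c * inner (U (r n) h) (comb (U (r n)) M) + inner (comb (U (r n)) L) (comb (U (r n)) M))
      \<longlonglongrightarrow> c * inner (z h) (comb z M) + inner (comb z L) (comb z M)"
    by (intro tendsto_intros comb_lim1[OF h assms(1)] Cons.hyps L)
  then show ?case using a by (simp add: inner_add_left)
qed

lemma comb_norm_lim:
  assumes "L \<in> Lc"
  shows "(\<lambda>n. (norm (comb (U (r n)) L))\<^sup>2) \<longlonglongrightarrow> (norm (comb z L))\<^sup>2"
  using comb_lim[OF assms assms] by (simp add: power2_norm_eq_inner)

lemma comb_norm_lim':
  assumes "L \<in> Lc"
  shows "(\<lambda>n. norm (comb (U (r n)) L)) \<longlonglongrightarrow> norm (comb z L)"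
proof -
  have "(\<lambda>n. sqrt ((norm (comb (U (r n)) L))\<^sup>2)) \<longlonglongrightarrow> sqrt ((norm (comb z L))\<^sup>2)"
    by (intro tendsto_intros comb_norm_lim assms)
  then show ?thesis by simp
qed

lemma comb_diff_lim:
  assumes "L \<in> Lc" "M \<in> Lc"
  shows "(\<lambda>n. (norm (comb (U (r n)) L - comb (U (r n)) M))\<^sup>2) \<longlonglongrightarrow> (norm (comb z L - comb z M))\<^sup>2"
proof -
  have "L @ negl M \<in> Lc" using assms negl_lists by auto
  from comb_norm_lim[OF this] show ?thesis by simp
qed

lemma z_one: "z \<one> = 0"
proof -
  have "(\<lambda>n. inner (U (r n) \<one>) (U (r n) \<one>)) \<longlonglongrightarrow> inner (z \<one>) (z \<one>)" by (rule zlim') auto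
  then have "(\<lambda>n. 0) \<longlonglongrightarrow> inner (z \<one>) (z \<one>)" by (simp add: U_one)
  then have "inner (z \<one>) (z \<one>) = 0" using LIMSEQ_unique tendsto_const by blast
  then show ?thesis by simp
qed

lemma shl_bound:
  assumes "g \<in> carrier G" "L \<in> Lc"
  shows "norm (comb z (shl g L)) \<le> norm (A g) * norm (comb z L)"
proof -
  have sL: "shl g L \<in> Lc" using shl_lists assms by auto
  have l1: "(\<lambda>n. (norm (comb (U (r n)) (shl g L)))\<^sup>2) \<longlonglongrightarrow> (norm (comb z (shl g L)))\<^sup>2"
    by (rule comb_norm_lim[OF sL])
  have l2: "(\<lambda>n. (norm (A g) * norm (comb (U (r n)) L))\<^sup>2) \<longlonglongrightarrow> (norm (A g) * norm (comb z L))\<^sup>2"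
    by (intro tendsto_intros comb_norm_lim'[OF assms(2)])
  have le: "(norm (comb (U (r n)) (shl g L)))\<^sup>2 \<le> (norm (A g) * norm (comb (U (r n)) L))\<^sup>2" for n
    unfolding comb_U_shl[OF assms] by (intro power_mono norm_blinfun) auto
  have "(norm (comb z (shl g L)))\<^sup>2 \<le> (norm (A g) * norm (comb z L))\<^sup>2"
    using l1 l2 le by (intro LIMSEQ_le) auto
  then show ?thesis by (rule power2_le_imp_le) simp
qed

lemma shl_append: "comb f (shl g (L @ M)) = comb f (shl g L) + comb f (shl g M)"
  unfolding comb_shl by simp

lemma shl_negl: "comb f (shl g (negl L)) = - comb f (shl g L)"
  unfolding comb_shl by simp

lemma shl_scl: "comb f (shl g (scl c L)) = c *\<^sub>R comb f (shl g L)"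
  unfolding comb_shl by simp

lemma shl_wd:
  assumes "g \<in> carrier G" "L \<in> Lc" "M \<in> Lc" "comb z L = comb z M"
  shows "comb z (shl g L) = comb z (shl g M)"
proof -
  have LM: "L @ negl M \<in> Lc" using assms negl_lists by auto
  have "norm (comb z (shl g (L @ negl M))) \<le> norm (A g) * norm (comb z (L @ negl M))"
    by (rule shl_bound[OF assms(1) LM])
  also have "comb z (L @ negl M) = 0" using assms(4) by simp
  finally have "comb z (shl g (L @ negl M)) = 0" by simp
  then show ?thesis by (simp add: shl_append shl_negl)
qed

definition V0 :: "'h set" where "V0 = {comb z L | L. L \<in> Lc}"

lemma V0_subspace: "subspace V0"
  unfolding subspace_def V0_def
proof (intro conjI ballI allI)
  show "0 \<in> {comb z L |L. L \<in> Lc}" by (auto intro!: exI[of _ "[]"])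
next
  fix v w assume "v \<in> {comb z L |L. L \<in> Lc}" "w \<in> {comb z L |L. L \<in> Lc}"
  then obtain L M where "L \<in> Lc" "M \<in> Lc" "v = comb z L" "w = comb z M" by auto
  then show "v + w \<in> {comb z L |L. L \<in> Lc}" by (auto intro!: exI[of _ "L @ M"])
next
  fix c :: real and v assume "v \<in> {comb z L |L. L \<in> Lc}"
  then obtain L where "L \<in> Lc" "v = comb z L" by auto
  moreover have "scl c L \<in> Lc" using \<open>L \<in> Lc\<close> by (rule scl_lists)
  ultimately show "c *\<^sub>R v \<in> {comb z L |L. L \<in> Lc}" by (auto intro!: exI[of _ "scl c L"])
qed

lemma z_in_V0: "g \<in> carrier G \<Longrightarrow> z g \<in> V0"
  unfolding V0_def by (auto intro!: exI[of _ "[(1, g)]"])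

definition T0 :: "'g \<Rightarrow> 'h \<Rightarrow> 'h" where
  "T0 g v = comb z (shl g (SOME L. L \<in> Lc \<and> comb z L = v))"

lemma T0_comb: "g \<in> carrier G \<Longrightarrow> L \<in> Lc \<Longrightarrow> T0 g (comb z L) = comb z (shl g L)"
proof -
  assume g: "g \<in> carrier G" and L: "L \<in> Lc"
  define M where "M = (SOME M. M \<in> Lc \<and> comb z M = comb z L)"
  have "M \<in> Lc \<and> comb z M = comb z L" unfolding M_def by (rule someI[of _ L]) (use L in auto)
  then show ?thesis unfolding T0_def M_def[symmetric] using shl_wd[OF g] L by metis
qed

lemma V0_E: "v \<in> V0 \<Longrightarrow> (\<And>L. L \<in> Lc \<Longrightarrow> v = comb z L \<Longrightarrow> P) \<Longrightarrow> P"
  unfolding V0_def by auto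

lemma T0_add: "g \<in> carrier G \<Longrightarrow> v \<in> V0 \<Longrightarrow> w \<in> V0 \<Longrightarrow> T0 g (v + w) = T0 g v + T0 g w"
proof -
  assume g: "g \<in> carrier G" and "v \<in> V0" "w \<in> V0"
  then obtain L M where L: "L \<in> Lc" "v = comb z L" and M: "M \<in> Lc" "w = comb z M" by (metis V0_E)
  have LM: "L @ M \<in> Lc" using L M by simp
  have "T0 g (v + w) = T0 g (comb z (L @ M))" using L M by simp
  also have "\<dots> = comb z (shl g (L @ M))" by (rule T0_comb[OF g LM])
  also have "\<dots> = T0 g v + T0 g w" using L M T0_comb[OF g] by (simp add: shl_append)
  finally show ?thesis .
qed

lemma T0_scale: "g \<in> carrier G \<Longrightarrow> v \<in> V0 \<Longrightarrow> T0 g (c *\<^sub>R v) = c *\<^sub>R T0 g v"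
proof -
  assume g: "g \<in> carrier G" and v: "v \<in> V0"
  then obtain L where L: "L \<in> Lc" "v = comb z L" by (elim V0_E)
  have "T0 g (c *\<^sub>R v) = T0 g (comb z (scl c L))" using L by simp
  also have "\<dots> = comb z (shl g (scl c L))" using T0_comb g scl_lists L by blast
  also have "\<dots> = c *\<^sub>R T0 g v" using L T0_comb[OF g] by (simp add: shl_scl)
  finally show ?thesis .
qed

lemma T0_in: "g \<in> carrier G \<Longrightarrow> v \<in> V0 \<Longrightarrow> T0 g v \<in> V0"
proof -
  assume g: "g \<in> carrier G" and "v \<in> V0"
  then obtain L where L: "L \<in> Lc" "v = comb z L" by (metis V0_E)
  have "shl g L \<in> Lc" using shl_lists g L by auto
  then show ?thesis unfolding V0_def using T0_comb[OF g L(1)] L(2) by auto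
qed

lemma T0_bound: "g \<in> carrier G \<Longrightarrow> v \<in> V0 \<Longrightarrow> norm (T0 g v) \<le> norm (A g) * norm v"
proof -
  assume g: "g \<in> carrier G" and "v \<in> V0"
  then obtain L where L: "L \<in> Lc" "v = comb z L" by (metis V0_E)
  then show ?thesis using T0_comb[OF g L(1)] shl_bound[OF g L(1)] by simp
qed

lemma T0_comp: "g \<in> carrier G \<Longrightarrow> h \<in> carrier G \<Longrightarrow> v \<in> V0 \<Longrightarrow> T0 g (T0 h v) = T0 (g \<otimes> h) v"
proof -
  assume g: "g \<in> carrier G" and h: "h \<in> carrier G" and "v \<in> V0"
  then obtain L where L: "L \<in> Lc" "v = comb z L" by (metis V0_E)
  have sL: "shl h L \<in> Lc" using shl_lists h L by auto
  have gh: "g \<otimes> h \<in> carrier G" using g h by simp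
  show ?thesis using T0_comb[OF h L(1)] T0_comb[OF g sL] T0_comb[OF gh L(1)] shl_shl[OF g h L(1)] L(2)
    by simp
qed

lemma T0_one: "v \<in> V0 \<Longrightarrow> T0 \<one> v = v"
proof -
  assume "v \<in> V0"
  then obtain L where L: "L \<in> Lc" "v = comb z L" by (metis V0_E)
  have "comb z (shl \<one> L) = comb z L"
    using L(1) by (simp add: comb_shl z_one) (intro comb_cong_lists[where C="carrier G"], auto)
  then show ?thesis using T0_comb[OF one_closed L(1)] L(2) by simp
qed

lemma T0_z: "g \<in> carrier G \<Longrightarrow> h \<in> carrier G \<Longrightarrow> T0 g (z h) = z (g \<otimes> h) - z g"
proof -
  assume g: "g \<in> carrier G" and h: "h \<in> carrier G"
  have "T0 g (comb z [(1, h)]) = comb z (shl g [(1, h)])" by (rule T0_comb[OF g]) (use h in auto)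
  then have "T0 g (z h) = comb z (shl g [(1, h)])" by simp
  also have "\<dots> = z (g \<otimes> h) - z g" by (simp add: comb_shl)
  finally show ?thesis .
qed

end



context lim_setting
begin

definition V :: "'h set" where "V = closure V0"

lemma V0_V: "V0 \<subseteq> V" unfolding V_def by (rule closure_subset)

lemma V_closed: "closed V" unfolding V_def by simp

lemma V_seq: assumes "v \<in> V" obtains s where "\<And>n. s n \<in> V0" "s \<longlonglongrightarrow> v"
  using assms unfolding V_def closure_sequential by blast

lemma V_lim: "(\<And>n. s n \<in> V) \<Longrightarrow> s \<longlonglongrightarrow> v \<Longrightarrow> v \<in> V"
  using V_closed closed_sequentially by blast

lemma V0_lim: "(\<And>n. s n \<in> V0) \<Longrightarrow> s \<longlonglongrightarrow> v \<Longrightarrow> v \<in> V"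
  using V_lim V0_V by blast

lemma V_subspace: "subspace V"
  unfolding subspace_def
proof (intro conjI ballI allI)
  show "0 \<in> V" using V0_V subspace_0[OF V0_subspace] by auto
next
  fix v w assume "v \<in> V" "w \<in> V"
  then obtain s t where "\<And>n. s n \<in> V0" "s \<longlonglongrightarrow> v" "\<And>n. t n \<in> V0" "t \<longlonglongrightarrow> w"
    by (metis V_seq)
  then show "v + w \<in> V"
    by (intro V0_lim[of "\<lambda>n. s n + t n"] tendsto_intros) (auto intro: subspace_add[OF V0_subspace])
next
  fix c :: real and v assume "v \<in> V"
  then obtain s where "\<And>n. s n \<in> V0" "s \<longlonglongrightarrow> v" by (metis V_seq)
  then show "c *\<^sub>R v \<in> V"
    by (intro V0_lim[of "\<lambda>n. c *\<^sub>R s n"] tendsto_intros) (auto intro: subspace_scale[OF V0_subspace])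
qed

sublocale cs: closed_subspace V
  by unfold_locales (rule V_subspace, rule V_closed)

lemma T0_diff: "g \<in> carrier G \<Longrightarrow> v \<in> V0 \<Longrightarrow> w \<in> V0 \<Longrightarrow> T0 g (v - w) = T0 g v - T0 g w"
proof -
  assume g: "g \<in> carrier G" and v: "v \<in> V0" and w: "w \<in> V0"
  have mw: "(-1) *\<^sub>R w \<in> V0" using w subspace_scale[OF V0_subspace] by blast
  have "T0 g (v - w) = T0 g (v + (-1) *\<^sub>R w)" by simp
  also have "\<dots> = T0 g v + T0 g ((-1) *\<^sub>R w)" using T0_add[OF g v mw] .
  also have "\<dots> = T0 g v - T0 g w" using T0_scale[OF g w, of "-1"] by simp
  finally show ?thesis .
qed

lemma T0_lip: "g \<in> carrier G \<Longrightarrow> (norm (A g))-lipschitz_on V0 (T0 g)"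
proof (rule lipschitz_onI)
  fix v w assume g: "g \<in> carrier G" and v: "v \<in> V0" and w: "w \<in> V0"
  have vw: "v - w \<in> V0" using v w subspace_diff[OF V0_subspace] by blast
  show "dist (T0 g v) (T0 g w) \<le> norm (A g) * dist v w"
    unfolding dist_norm T0_diff[OF g v w, symmetric] by (rule T0_bound[OF g vw])
qed simp

definition Tx :: "'g \<Rightarrow> 'h \<Rightarrow> 'h" where
  "Tx g = (SOME h. (norm (A g))-lipschitz_on V h \<and> (\<forall>v\<in>V0. h v = T0 g v))"

lemma Tx_props:
  assumes "g \<in> carrier G"
  shows "(norm (A g))-lipschitz_on V (Tx g)" "\<And>v. v \<in> V0 \<Longrightarrow> Tx g v = T0 g v"
proof -
  have "\<exists>h. (norm (A g))-lipschitz_on V h \<and> (\<forall>v\<in>V0. h v = T0 g v)"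
    using lipschitz_extend_closure[OF T0_lip[OF assms]] unfolding V_def by metis
  then have "(norm (A g))-lipschitz_on V (Tx g) \<and> (\<forall>v\<in>V0. Tx g v = T0 g v)"
    unfolding Tx_def by (rule someI_ex)
  then show "(norm (A g))-lipschitz_on V (Tx g)" "\<And>v. v \<in> V0 \<Longrightarrow> Tx g v = T0 g v" by auto
qed

lemma Tx_tendsto:
  assumes "g \<in> carrier G" "\<And>n. s n \<in> V" "s \<longlonglongrightarrow> v"
  shows "(\<lambda>n. Tx g (s n)) \<longlonglongrightarrow> Tx g v"
proof -
  have v: "v \<in> V" using V_lim assms(2,3) by blast
  show ?thesis
    by (rule continuous_on_tendsto_compose[OF lipschitz_on_continuous_on[OF Tx_props(1)[OF assms(1)]]
          assms(3) v]) (use assms(2) in auto)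
qed

lemma Tx_in: assumes "g \<in> carrier G" "v \<in> V" shows "Tx g v \<in> V"
proof -
  obtain s where s: "\<And>n. s n \<in> V0" "s \<longlonglongrightarrow> v" using V_seq assms(2) by blast
  have "(\<lambda>n. Tx g (s n)) \<longlonglongrightarrow> Tx g v" by (rule Tx_tendsto[OF assms(1)]) (use s V0_V in auto)
  moreover have "\<And>n. Tx g (s n) \<in> V0" using Tx_props(2)[OF assms(1) s(1)] T0_in[OF assms(1) s(1)] by simp
  ultimately show ?thesis using V0_lim[of "\<lambda>n. Tx g (s n)"] by blast
qed

lemma Tx_add: assumes "g \<in> carrier G" "v \<in> V" "w \<in> V" shows "Tx g (v + w) = Tx g v + Tx g w"
proof -
  obtain s where s: "\<And>n. s n \<in> V0" "s \<longlonglongrightarrow> v" using V_seq assms(2) by blast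
  obtain t where t: "\<And>n. t n \<in> V0" "t \<longlonglongrightarrow> w" using V_seq assms(3) by blast
  have st: "s n + t n \<in> V0" for n using s t subspace_add[OF V0_subspace] by blast
  have "(\<lambda>n. s n + t n) \<longlonglongrightarrow> v + w" using s t by (intro tendsto_intros)
  then have l1: "(\<lambda>n. Tx g (s n + t n)) \<longlonglongrightarrow> Tx g (v + w)"
    by (rule Tx_tendsto[OF assms(1), rotated]) (use st V0_V in auto)
  have ls: "(\<lambda>n. Tx g (s n)) \<longlonglongrightarrow> Tx g v" by (rule Tx_tendsto[OF assms(1)]) (use s V0_V in auto)
  have lt: "(\<lambda>n. Tx g (t n)) \<longlonglongrightarrow> Tx g w" by (rule Tx_tendsto[OF assms(1)]) (use t V0_V in auto)
  have l2: "(\<lambda>n. Tx g (s n) + Tx g (t n)) \<longlonglongrightarrow> Tx g v + Tx g w"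
    using ls lt by (rule tendsto_add)
  have "Tx g (s n + t n) = Tx g (s n) + Tx g (t n)" for n
    using Tx_props(2)[OF assms(1)] st s t T0_add[OF assms(1)] by simp
  then show ?thesis using l1 l2 LIMSEQ_unique by simp
qed

lemma Tx_scale: assumes "g \<in> carrier G" "v \<in> V" shows "Tx g (c *\<^sub>R v) = c *\<^sub>R Tx g v"
proof -
  obtain s where s: "\<And>n. s n \<in> V0" "s \<longlonglongrightarrow> v" using V_seq assms(2) by blast
  have st: "c *\<^sub>R s n \<in> V0" for n using s subspace_scale[OF V0_subspace] by blast
  have "(\<lambda>n. c *\<^sub>R s n) \<longlonglongrightarrow> c *\<^sub>R v" using s by (intro tendsto_intros)
  then have l1: "(\<lambda>n. Tx g (c *\<^sub>R s n)) \<longlonglongrightarrow> Tx g (c *\<^sub>R v)"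
    by (rule Tx_tendsto[OF assms(1), rotated]) (use st V0_V in auto)
  have ls: "(\<lambda>n. Tx g (s n)) \<longlonglongrightarrow> Tx g v" by (rule Tx_tendsto[OF assms(1)]) (use s V0_V in auto)
  have l2: "(\<lambda>n. c *\<^sub>R Tx g (s n)) \<longlonglongrightarrow> c *\<^sub>R Tx g v"
    using ls by (intro tendsto_intros)
  have "Tx g (c *\<^sub>R s n) = c *\<^sub>R Tx g (s n)" for n
    using Tx_props(2)[OF assms(1)] st s T0_scale[OF assms(1)] by simp
  then show ?thesis using l1 l2 LIMSEQ_unique by simp
qed

lemma Tx_bound: assumes "g \<in> carrier G" "v \<in> V" shows "norm (Tx g v) \<le> norm (A g) * norm v"
proof -
  obtain s where s: "\<And>n. s n \<in> V0" "s \<longlonglongrightarrow> v" using V_seq assms(2) by blast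
  have ls: "(\<lambda>n. Tx g (s n)) \<longlonglongrightarrow> Tx g v" by (rule Tx_tendsto[OF assms(1)]) (use s V0_V in auto)
  have l1: "(\<lambda>n. norm (Tx g (s n))) \<longlonglongrightarrow> norm (Tx g v)"
    using ls by (intro tendsto_intros)
  have l2: "(\<lambda>n. norm (A g) * norm (s n)) \<longlonglongrightarrow> norm (A g) * norm v"
    using s by (intro tendsto_intros) auto
  have "norm (Tx g (s n)) \<le> norm (A g) * norm (s n)" for n
    using Tx_props(2)[OF assms(1) s(1)] T0_bound[OF assms(1) s(1)] by simp
  then show ?thesis using l1 l2 by (intro LIMSEQ_le) auto
qed

lemma Tx_comp:
  assumes "g \<in> carrier G" "h \<in> carrier G" "v \<in> V"
  shows "Tx g (Tx h v) = Tx (g \<otimes> h) v"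
proof -
  obtain s where s: "\<And>n. s n \<in> V0" "s \<longlonglongrightarrow> v" using V_seq assms(3) by blast
  have gh: "g \<otimes> h \<in> carrier G" using assms by simp
  have l0: "(\<lambda>n. Tx h (s n)) \<longlonglongrightarrow> Tx h v" by (rule Tx_tendsto[OF assms(2)]) (use s V0_V in auto)
  have in0: "Tx h (s n) \<in> V0" for n using Tx_props(2)[OF assms(2) s(1)] T0_in[OF assms(2) s(1)] by simp
  have l1: "(\<lambda>n. Tx g (Tx h (s n))) \<longlonglongrightarrow> Tx g (Tx h v)"
    by (rule Tx_tendsto[OF assms(1) _ l0]) (use in0 V0_V in auto)
  have l2: "(\<lambda>n. Tx (g \<otimes> h) (s n)) \<longlonglongrightarrow> Tx (g \<otimes> h) v"
    by (rule Tx_tendsto[OF gh]) (use s V0_V in auto)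
  have "Tx g (Tx h (s n)) = Tx (g \<otimes> h) (s n)" for n
    using Tx_props(2)[OF assms(2) s(1)] Tx_props(2)[OF assms(1) in0] Tx_props(2)[OF gh s(1)]
      T0_in[OF assms(2) s(1)] T0_comp[OF assms(1,2) s(1)] by simp
  then show ?thesis using l1 l2 LIMSEQ_unique by simp
qed

lemma Tx_one: assumes "v \<in> V" shows "Tx \<one> v = v"
proof -
  obtain s where s: "\<And>n. s n \<in> V0" "s \<longlonglongrightarrow> v" using V_seq assms by blast
  have l1: "(\<lambda>n. Tx \<one> (s n)) \<longlonglongrightarrow> Tx \<one> v"
    by (rule Tx_tendsto[OF one_closed]) (use s V0_V in auto)
  have "Tx \<one> (s n) = s n" for n using Tx_props(2)[OF one_closed s(1)] T0_one[OF s(1)] by simp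
  then show ?thesis using l1 s(2) LIMSEQ_unique by simp
qed

lemma Tx_z: "g \<in> carrier G \<Longrightarrow> h \<in> carrier G \<Longrightarrow> Tx g (z h) = z (g \<otimes> h) - z g"
  using Tx_props(2) z_in_V0 T0_z by simp

end



context lim_setting
begin

abbreviation "PV \<equiv> proj V"

definition Af :: "'g \<Rightarrow> 'h \<Rightarrow> 'h" where "Af g v = Tx g (PV v) + (v - PV v)"

lemma PV_perp: "PV (v - PV v) = 0"
  by (rule cs.proj_unique) (use cs.proj(2) subspace_0[OF V_subspace] in auto)

lemma Af_bl: assumes "g \<in> carrier G" shows "bounded_linear (Af g)"
proof (rule bounded_linear_intro[of _ "norm (A g) + 1"])
  fix u v
  show "Af g (u + v) = Af g u + Af g v"
    unfolding Af_def cs.proj_add by (simp add: Tx_add[OF assms cs.proj(1) cs.proj(1)] algebra_simps)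
next
  fix c :: real and v
  show "Af g (c *\<^sub>R v) = c *\<^sub>R Af g v"
    unfolding Af_def cs.proj_scale by (simp add: Tx_scale[OF assms cs.proj(1)] algebra_simps)
next
  fix v
  have "norm (Af g v) \<le> norm (Tx g (PV v)) + norm (v - PV v)" unfolding Af_def by (rule norm_triangle_ineq)
  also have "\<dots> \<le> norm (A g) * norm (PV v) + norm v"
  proof (rule add_mono)
    show "norm (Tx g (PV v)) \<le> norm (A g) * norm (PV v)" by (rule Tx_bound[OF assms cs.proj(1)])
    show "norm (v - PV v) \<le> norm v"
      using cs.proj_pyth[of v] by (metis add.commute le_add_same_cancel2 norm_ge_zero power2_le_imp_le zero_le_power2)
  qed
  also have "\<dots> \<le> norm (A g) * norm v + norm v"
    using cs.proj_norm[of v] by (intro add_mono mult_left_mono) auto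
  finally show "norm (Af g v) \<le> norm v * (norm (A g) + 1)" by (simp add: algebra_simps)
qed

definition A' :: "'g \<Rightarrow> ('h \<Rightarrow>\<^sub>L 'h)" where
  "A' g = (if g \<in> carrier G then Blinfun (Af g) else id_blinfun)"

lemma A'_apply: "g \<in> carrier G \<Longrightarrow> blinfun_apply (A' g) v = Af g v"
  unfolding A'_def by (simp add: bounded_linear_Blinfun_apply[OF Af_bl])

lemma PV_Af: "g \<in> carrier G \<Longrightarrow> PV (Af g v) = Tx g (PV v)"
  unfolding Af_def cs.proj_add PV_perp using cs.proj_id Tx_in cs.proj(1) by simp

lemma Af_z: "g \<in> carrier G \<Longrightarrow> h \<in> carrier G \<Longrightarrow> Af g (z h) = z (g \<otimes> h) - z g"
proof -
  assume g: "g \<in> carrier G" and h: "h \<in> carrier G"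
  have "z h \<in> V" using z_in_V0[OF h] V0_V by auto
  then show ?thesis unfolding Af_def using cs.proj_id Tx_z[OF g h] by simp
qed

lemma A'_norm: assumes "g \<in> carrier G" shows "norm (A' g) \<le> max 1 (norm (A g))"
proof (rule norm_blinfun_bound)
  show "0 \<le> max 1 (norm (A g))" by simp
  fix v
  define M where "M = max 1 (norm (A g))"
  have o: "inner (Tx g (PV v)) (v - PV v) = 0"
    using cs.proj(2)[OF Tx_in[OF assms cs.proj(1)], of v] by (simp add: inner_commute)
  have "(norm (blinfun_apply (A' g) v))\<^sup>2 = (norm (Tx g (PV v)))\<^sup>2 + (norm (v - PV v))\<^sup>2"
    unfolding A'_apply[OF assms] Af_def by (rule pyth_orth[OF o])
  also have "\<dots> \<le> (M * norm (PV v))\<^sup>2 + (M * norm (v - PV v))\<^sup>2"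
  proof (rule add_mono)
    have "norm (Tx g (PV v)) \<le> norm (A g) * norm (PV v)" by (rule Tx_bound[OF assms cs.proj(1)])
    also have "\<dots> \<le> M * norm (PV v)" unfolding M_def by (intro mult_right_mono) auto
    finally show "(norm (Tx g (PV v)))\<^sup>2 \<le> (M * norm (PV v))\<^sup>2" by (intro power_mono) auto
    have "1 * norm (v - PV v) \<le> M * norm (v - PV v)" unfolding M_def
      by (intro mult_right_mono) auto
    then have "norm (v - PV v) \<le> M * norm (v - PV v)" by simp
    then show "(norm (v - PV v))\<^sup>2 \<le> (M * norm (v - PV v))\<^sup>2" by (intro power_mono) auto
  qed
  also have "\<dots> = M\<^sup>2 * ((norm (PV v))\<^sup>2 + (norm (v - PV v))\<^sup>2)" by (simp add: power_mult_distrib algebra_simps)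
  also have "\<dots> = (M * norm v)\<^sup>2" using cs.proj_pyth[of v] by (simp add: power_mult_distrib)
  finally have "(norm (blinfun_apply (A' g) v))\<^sup>2 \<le> (M * norm v)\<^sup>2" .
  then have "norm (blinfun_apply (A' g) v) \<le> M * norm v"
    by (rule power2_le_imp_le) (simp add: M_def)
  then show "norm (blinfun_apply (A' g) v) \<le> max 1 (norm (A g)) * norm v" unfolding M_def .
qed

lemma A'_action: "affine_action G A' z"
  unfolding affine_action_def
proof (intro conjI ballI allI)
  fix v
  show "aff A' z \<one> v = v"
    unfolding aff_def A'_apply[OF one_closed] Af_def z_one using Tx_one[OF cs.proj(1)] by simp
next
  fix g h v assume g: "g \<in> carrier G" and h: "h \<in> carrier G"
  have gh: "g \<otimes> h \<in> carrier G" using g h by simp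
  have "aff A' z g (aff A' z h v) = Af g (Af h v + z h) + z g"
    unfolding aff_def A'_apply[OF g] A'_apply[OF h] ..
  also have "\<dots> = Af g (Af h v) + Af g (z h) + z g"
    using linear_simps(1)[OF Af_bl[OF g]] by simp
  also have "Af g (Af h v) = Af (g \<otimes> h) v"
    unfolding Af_def[of g] PV_Af[OF h]
    using Tx_comp[OF g h cs.proj(1)] by (simp add: Af_def)
  finally show "aff A' z (g \<otimes> h) v = aff A' z g (aff A' z h v)"
    unfolding aff_def A'_apply[OF gh] Af_z[OF g h] by simp
qed

end



context lim_setting
begin

definition E' :: "'h \<Rightarrow> real" where "E' v = Eg G S x (aff A' z) v"

definition Ql :: "'g \<Rightarrow> (real \<times> 'g) list \<Rightarrow> (real \<times> 'g) list" where
  "Ql g L = shl g L @ [(1, g)]"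

lemma Ql_lists: "g \<in> carrier G \<Longrightarrow> L \<in> Lc \<Longrightarrow> Ql g L \<in> Lc"
  unfolding Ql_def using shl_lists by auto

lemma aff'_proj: "g \<in> carrier G \<Longrightarrow> aff A' z g v = aff A' z g (PV v) + (v - PV v)"
  unfolding aff_def A'_apply Af_def using cs.proj_id[OF cs.proj(1)] by simp

lemma E'_proj: "E' v = E' (PV v)"
proof -
  have xs: "x \<otimes> s \<in> carrier G" if "s \<in> S" for s using that SG xG by auto
  have "aff A' z x v - aff A' z (x \<otimes> s) v = aff A' z x (PV v) - aff A' z (x \<otimes> s) (PV v)" if "s \<in> S" for s
    using aff'_proj[OF xG, of v] aff'_proj[OF xs[OF that], of v] by simp
  then have "(\<Sum>s\<in>S. (norm (aff A' z x v - aff A' z (x \<otimes> s) v))\<^sup>2)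
      = (\<Sum>s\<in>S. (norm (aff A' z x (PV v) - aff A' z (x \<otimes> s) (PV v)))\<^sup>2)"
    by (intro sum.cong) auto
  then show ?thesis unfolding E'_def Eg_def by simp
qed

lemma aff'_comb: "g \<in> carrier G \<Longrightarrow> L \<in> Lc \<Longrightarrow> aff A' z g (comb z L) = comb z (Ql g L)"
proof -
  assume g: "g \<in> carrier G" and L: "L \<in> Lc"
  have V: "comb z L \<in> V" using L V0_V unfolding V0_def by auto
  have "Af g (comb z L) = Tx g (comb z L)" unfolding Af_def using cs.proj_id[OF V] by simp
  also have "\<dots> = T0 g (comb z L)" by (rule Tx_props(2)[OF g]) (use L in \<open>auto simp: V0_def\<close>)
  also have "\<dots> = comb z (shl g L)" by (rule T0_comb[OF g L])
  finally show ?thesis unfolding aff_def A'_apply[OF g] Ql_def by simp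
qed

lemma comb_U_Ql: "g \<in> carrier G \<Longrightarrow> L \<in> Lc \<Longrightarrow> comb (U n) (Ql g L) = blinfun_apply (A g) (comb (U n) L) + U n g"
  unfolding Ql_def using comb_U_shl by simp

lemma rho_w:
  assumes "g \<in> carrier G" "L \<in> Lc"
  shows "\<rho> g (p n + F (p n) *\<^sub>R comb (U n) L) = p n + F (p n) *\<^sub>R comb (U n) (Ql g L)"
proof -
  have Fp: "F (p n) \<noteq> 0" using F_pos[of "p n"] by simp
  have "\<rho> g (p n) = p n + F (p n) *\<^sub>R U n g" unfolding U_def D_def using Fp by simp
  moreover have "\<rho> g (p n + F (p n) *\<^sub>R comb (U n) L) = \<rho> g (p n) + F (p n) *\<^sub>R blinfun_apply (A g) (comb (U n) L)"
    unfolding aff_def by (simp add: blinfun.add_right blinfun.scaleR_right algebra_simps)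
  ultimately show ?thesis unfolding comb_U_Ql[OF assms] by (simp add: algebra_simps)
qed

definition Et :: "(real \<times> 'g) list \<Rightarrow> nat \<Rightarrow> real" where
  "Et L n = (1 / (2 * real (card S))) * (\<Sum>s\<in>S. (norm (comb (U n) (Ql x L) - comb (U n) (Ql (x \<otimes> s) L)))\<^sup>2)"

lemma E_w:
  assumes "L \<in> Lc"
  shows "E (p n + F (p n) *\<^sub>R comb (U n) L) = (F (p n))\<^sup>2 * Et L n"
proof -
  have xs: "x \<otimes> s \<in> carrier G" if "s \<in> S" for s using that SG xG by auto
  have d: "\<rho> x (p n + F (p n) *\<^sub>R comb (U n) L) - \<rho> (x \<otimes> s) (p n + F (p n) *\<^sub>R comb (U n) L)
      = F (p n) *\<^sub>R (comb (U n) (Ql x L) - comb (U n) (Ql (x \<otimes> s) L))" if "s \<in> S" for s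
    unfolding rho_w[OF xG assms] rho_w[OF xs[OF that] assms] by (simp add: algebra_simps)
  have "E (p n + F (p n) *\<^sub>R comb (U n) L)
      = (1 / (2 * real (card S))) * (\<Sum>s\<in>S. (F (p n))\<^sup>2 * (norm (comb (U n) (Ql x L) - comb (U n) (Ql (x \<otimes> s) L)))\<^sup>2)"
    unfolding E_def Eg_def using d F_pos[of "p n"]
    by (intro arg_cong2[where f="(*)"] refl sum.cong) (auto simp: power_mult_distrib)
  then show ?thesis unfolding Et_def by (simp add: sum_distrib_left[symmetric] algebra_simps)
qed

lemma Et_lim:
  assumes "L \<in> Lc"
  shows "(\<lambda>n. Et L (r n)) \<longlonglongrightarrow> E' (comb z L)"
proof -
  have xs: "x \<otimes> s \<in> carrier G" if "s \<in> S" for s using that SG xG by auto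
  have "(\<lambda>n. (1 / (2 * real (card S))) * (\<Sum>s\<in>S. (norm (comb (U (r n)) (Ql x L) - comb (U (r n)) (Ql (x \<otimes> s) L)))\<^sup>2))
      \<longlonglongrightarrow> (1 / (2 * real (card S))) * (\<Sum>s\<in>S. (norm (comb z (Ql x L) - comb z (Ql (x \<otimes> s) L)))\<^sup>2)"
    by (intro tendsto_intros comb_diff_lim Ql_lists xG xs assms)
  moreover have "E' (comb z L) = (1 / (2 * real (card S))) * (\<Sum>s\<in>S. (norm (comb z (Ql x L) - comb z (Ql (x \<otimes> s) L)))\<^sup>2)"
    unfolding E'_def Eg_def using aff'_comb[OF xG assms] aff'_comb[OF xs assms] by simp
  ultimately show ?thesis unfolding Et_def by simp
qed

lemma Et_nil: "Et [] n = 1"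
proof -
  have "E (p n) = (F (p n))\<^sup>2 * Et [] n" using E_w[of "[]" n] by simp
  then show ?thesis using F_sq[of "p n"] E_pos[of "p n"] by simp
qed

lemma E'_zero: "E' 0 = 1"
proof -
  have "(\<lambda>n. Et [] (r n)) \<longlonglongrightarrow> E' (comb z [])" by (rule Et_lim) simp
  then have "(\<lambda>n. 1) \<longlonglongrightarrow> E' 0" by (simp add: Et_nil)
  then show ?thesis using LIMSEQ_unique tendsto_const by metis
qed

lemma Et_lower:
  assumes "L \<in> Lc" "norm (comb (U n) L) \<le> real n + 1"
  shows "(1 - 1 / (real n + 2))\<^sup>2 \<le> Et L n"
proof -
  define w where "w = p n + F (p n) *\<^sub>R comb (U n) L"
  have Fp: "F (p n) > 0" by (rule F_pos)
  have "norm (w - p n) = F (p n) * norm (comb (U n) L)" unfolding w_def using Fp by simp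
  also have "\<dots> \<le> F (p n) * (real n + 1)" using assms(2) Fp by (intro mult_left_mono) auto
  finally have "(1 - 1 / (real n + 2)) * F (p n) \<le> F w" using gro[of w n] by (simp add: mult.commute)
  moreover have "0 \<le> (1 - 1 / (real n + 2)) * F (p n)" using Fp by (intro mult_nonneg_nonneg) auto
  ultimately have "((1 - 1 / (real n + 2)) * F (p n))\<^sup>2 \<le> (F w)\<^sup>2" by (intro power_mono)
  also have "(F w)\<^sup>2 = E w" by (rule F_sq)
  also have "\<dots> = (F (p n))\<^sup>2 * Et L n" unfolding w_def by (rule E_w[OF assms(1)])
  finally have "(F (p n))\<^sup>2 * (1 - 1 / (real n + 2))\<^sup>2 \<le> (F (p n))\<^sup>2 * Et L n"
    by (simp add: power_mult_distrib mult.commute)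
  then show ?thesis using Fp by simp
qed

lemma E'_V0: assumes "L \<in> Lc" shows "1 \<le> E' (comb z L)"
proof -
  have nl: "(\<lambda>n. norm (comb (U (r n)) L)) \<longlonglongrightarrow> norm (comb z L)" by (rule comb_norm_lim'[OF assms])
  then have ev1: "\<forall>\<^sub>F n in sequentially. norm (comb (U (r n)) L) < norm (comb z L) + 1"
    by (intro order_tendstoD) auto
  obtain N :: nat where N: "norm (comb z L) + 1 \<le> real N" using real_arch_simple by blast
  have ev2: "\<forall>\<^sub>F n in sequentially. N \<le> n" by (rule eventually_ge_at_top)
  have ev: "\<forall>\<^sub>F n in sequentially. (1 - 1 / (real n + 2))\<^sup>2 \<le> Et L (r n)"
    using ev1 ev2
  proof eventually_elim
    case (elim n)
    have rn: "n \<le> r n" using r_mono by (rule seq_suble)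
    have "norm (comb (U (r n)) L) \<le> real (r n) + 1" using elim N rn by linarith
    then have a: "(1 - 1 / (real (r n) + 2))\<^sup>2 \<le> Et L (r n)" by (rule Et_lower[OF assms])
    have "1 / (real (r n) + 2) \<le> 1 / (real n + 2)" using rn by (intro divide_left_mono) auto
    moreover have "1 / (real n + 2) \<le> 1" by simp
    ultimately have "(1 - 1 / (real n + 2))\<^sup>2 \<le> (1 - 1 / (real (r n) + 2))\<^sup>2"
      by (intro power_mono) auto
    then show ?case using a by linarith
  qed
  have l: "(\<lambda>n. (1 - 1 / (real n + 2))\<^sup>2) \<longlonglongrightarrow> (1 - 0)\<^sup>2"
  proof (intro tendsto_intros)
    have "(\<lambda>n. inverse (real (Suc (Suc n)))) \<longlonglongrightarrow> 0"
      using LIMSEQ_Suc[OF LIMSEQ_inverse_real_of_nat] by simp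
    moreover have "\<And>n. inverse (real (Suc (Suc n))) = 1 / (real n + 2)"
      by (simp add: inverse_eq_divide)
    ultimately show "(\<lambda>n. 1 / (real n + 2)) \<longlonglongrightarrow> 0" by simp
  qed
  show ?thesis using tendsto_le[OF _ Et_lim[OF assms] l ev] by simp
qed

lemma E'_cont: "continuous_on UNIV E'"
proof -
  have c: "continuous_on UNIV (aff A' z g)" for g unfolding aff_def by (intro continuous_intros)
  show ?thesis unfolding E'_def Eg_def
    by (intro continuous_intros continuous_on_subset[OF c]) auto
qed

lemma E'_ge1: "1 \<le> E' v"
proof -
  have PV: "PV v \<in> V" by (rule cs.proj(1))
  then obtain s where s: "\<And>n. s n \<in> V0" "s \<longlonglongrightarrow> PV v" by (metis V_seq)
  have l: "(\<lambda>n. E' (s n)) \<longlonglongrightarrow> E' (PV v)"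
    using continuous_on_tendsto_compose[OF E'_cont s(2)] by simp
  have "1 \<le> E' (s n)" for n
  proof -
    obtain L where "L \<in> Lc" "s n = comb z L" using s(1)[of n] by (rule V0_E)
    then show ?thesis using E'_V0 by simp
  qed
  then have "1 \<le> E' (PV v)" using l by (intro LIMSEQ_le_const) auto
  then show ?thesis using E'_proj by simp
qed

end



context setting
begin

lemma final:
  assumes "\<exists>B :: 'h::{real_inner,complete_space} set. infinite B \<and> independent B"
  shows "\<exists>(A' :: 'g \<Rightarrow> ('h \<Rightarrow>\<^sub>L 'h)) (b' :: 'g \<Rightarrow> 'h) (f :: 'g \<Rightarrow> 'h).
           affine_action G A' b' \<and>
           equivariant G (aff A' b') f \<and>
           (\<exists>y\<in>carrier G. \<exists>z\<in>carrier G. f y \<noteq> f z) \<and>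
           (\<forall>g :: 'g \<Rightarrow> 'h. equivariant G (aff A' b') g \<longrightarrow>
               local_energy G S f x \<le> local_energy G S g x) \<and>
           (\<forall>C \<sigma>. C > 0 \<longrightarrow> \<sigma> \<ge> 0 \<longrightarrow> linear_growth_bound G S A C \<sigma> \<longrightarrow>
               linear_growth_bound G S A' C \<sigma>)"
proof -
  have "\<exists>q. \<forall>w. norm (w - q) \<le> (real n + 1) * F q \<longrightarrow> (1 - 1 / (real n + 2)) * F q \<le> F w" for n
    by (rule gromov[OF F_cont F_pos]) auto
  then obtain p where p: "\<And>n w. norm (w - p n) \<le> (real n + 1) * F (p n) \<Longrightarrow> (1 - 1 / (real n + 2)) * F (p n) \<le> F w"
    by metis
  define u where "u n g = (1 / F (p n)) *\<^sub>R D (p n) g" for n g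
  have ub: "\<exists>K. \<forall>n. norm (u n g) \<le> K" if gG: "g \<in> carrier G" for g
  proof -
    obtain K where K: "\<And>q. norm (D q g) \<le> K * F q" using D_bound[OF gG] by blast
    have "norm (u n g) \<le> K" for n
    proof -
      have Fp: "F (p n) > 0" by (rule F_pos)
      have "norm (u n g) = norm (D (p n) g) / F (p n)" unfolding u_def using Fp by simp
      also have "\<dots> \<le> K * F (p n) / F (p n)" using K Fp by (intro divide_right_mono) auto
      also have "\<dots> = K" using Fp by simp
      finally show ?thesis .
    qed
    then show ?thesis by blast
  qed
  obtain B :: "'h set" where B: "infinite B" "independent B" using assms by blast
  obtain e :: "nat \<Rightarrow> 'h" where e: "\<And>i j. i \<noteq> j \<Longrightarrow> inner (e i) (e j) = 0" "\<And>i. inner (e i) (e i) = 1"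
    using orthonormal_seq_exists[OF B] by blast
  obtain r and z :: "'g \<Rightarrow> 'h" where rz: "strict_mono r"
    "\<And>g h. g \<in> carrier G \<Longrightarrow> h \<in> carrier G \<Longrightarrow> (\<lambda>n. inner (u (r n) g) (u (r n) h)) \<longlonglongrightarrow> inner (z g) (z h)"
    using limit_realize[of "carrier G" u e, OF carrier_countable _ ub e] by blast
  interpret L: lim_setting G S A b x p r z
    by unfold_locales (use p rz in \<open>auto simp: u_def\<close>)
  define f where "f y = aff L.A' z y 0" for y
  have f1: "f \<one> = 0" unfolding f_def using L.A'_action unfolding affine_action_def by auto
  have eqf: "equivariant G (aff L.A' z) f" unfolding f_def by (rule orbit_equivariant[OF grp L.A'_action])
  have enf: "local_energy G S f x = 1"
    using energy_orbit[OF grp eqf xG SG] f1 L.E'_zero unfolding L.E'_def by simp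
  have nonconst: "\<exists>y\<in>carrier G. \<exists>z\<in>carrier G. f y \<noteq> f z"
  proof (rule ccontr)
    assume "\<not> ?thesis"
    then have "\<And>s. s \<in> S \<Longrightarrow> f x = f (x \<otimes> s)" using xG SG by blast
    then have "local_energy G S f x = 0" unfolding local_energy_def by simp
    then show False using enf by simp
  qed
  have minf: "local_energy G S f x \<le> local_energy G S g x" if "equivariant G (aff L.A' z) g" for g
    using energy_orbit[OF grp that xG SG] L.E'_ge1[of "g \<one>"] enf unfolding L.E'_def by simp
  obtain v :: 'a where v: "v \<noteq> 0"
  proof (rule ccontr)
    assume "\<not> thesis"
    then have "\<And>v::'a. v = 0" using that by blast
    then have "has_fixed_point G \<rho>" unfolding has_fixed_point_def by metis
    then show False using nofix by simp
  qed
  have growth: "linear_growth_bound G S L.A' C \<sigma>" if "linear_growth_bound G S A C \<sigma>" for C \<sigma>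
    by (rule growth_transfer[OF act SG symS v L.A'_norm that])
  show ?thesis
    apply (rule exI[of _ L.A'])
    apply (rule exI[of _ z])
    apply (rule exI[of _ f])
    using L.A'_action eqf nonconst minf growth by blast
qed

end

theorem mainTheorem6:
  fixes G :: "('g, 'c) monoid_scheme"
    and S :: "'g set"
    and A :: "'g \<Rightarrow> ('a::{real_inner,complete_space} \<Rightarrow>\<^sub>L 'a)"
    and b :: "'g \<Rightarrow> 'a"
    and x :: 'g
  assumes "group G"
    and "finite S" and "S \<subseteq> carrier G"
    and "\<forall>s\<in>S. inv\<^bsub>G\<^esub> s \<in> S"
    and "generate G S = carrier G"
    and "affine_action G A b"
    and "\<not> has_fixed_point G (aff A b)"
    and "x \<in> carrier G"
    and "\<exists>B :: 'b::{real_inner,complete_space} set. infinite B \<and> independent B"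
  shows "\<exists>(A' :: 'g \<Rightarrow> ('b \<Rightarrow>\<^sub>L 'b)) (b' :: 'g \<Rightarrow> 'b) (f :: 'g \<Rightarrow> 'b).
           affine_action G A' b' \<and>
           equivariant G (aff A' b') f \<and>
           (\<exists>y\<in>carrier G. \<exists>z\<in>carrier G. f y \<noteq> f z) \<and>
           (\<forall>g :: 'g \<Rightarrow> 'b. equivariant G (aff A' b') g \<longrightarrow>
               local_energy G S f x \<le> local_energy G S g x) \<and>
           (\<forall>C \<sigma>. C > 0 \<longrightarrow> \<sigma> \<ge> 0 \<longrightarrow> linear_growth_bound G S A C \<sigma> \<longrightarrow>
               linear_growth_bound G S A' C \<sigma>)"
proof -
  interpret setting G S A b x
    by (intro setting.intro setting_axioms.intro assms(1)) (use assms in auto)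
  show ?thesis by (rule final[OF assms(9)])
qed

end
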